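(* Let $A\in\mathbb{R}^{n\times n}$, $T>0$, $X_0,U\in\mathbb{A}_n$. For $N\in\mathbb{N}$ let $\tau=T/N$, $\epsilon_h=1-1/N^2$, $\epsilon_u=1-1/N$, and assume $\tau\in\mathbb{I}$ and $\tau\|A\|\le1$. Let $\mathcal{S}_i^N,\mathcal{V}_i^N,\mathcal{W}_i^N,\Lambda_i^N$ ($i\in\{0,\dots,N\}$) be defined by $\mathcal{S}_0^N=X_0$, $\mathcal{S}_i^N=\mathcal{H}(\tau,\mathcal{S}_{i-1}^N,\epsilon_h)$; $\mathcal{V}_0^N=\mathcal{I}(\tau,U,\epsilon_u)$, $\mathcal{V}_i^N=\mathcal{H}(\tau,\mathcal{V}_{i-1}^N,\epsilon_h)$; $\mathcal{W}_0^N=\{0\}$, $\mathcal{W}_i^N=\mathcal{W}_{i-1}^N+\mathcal{V}_{i-1}^N$; $\Lambda_i^N=\mathcal{S}_i^N+\mathcal{W}_i^N$. Then there exist constants $D_1,D_2,D_3,D_4\ge0$, independent of $N$, such that for every such $N$ and all $i\in\{0,\dots,N\}$: $\mathfrak{d}(\mathcal{S}_i^N,\mathcal{R}_h(i\tau))\le D_1\tau$, $\mathfrak{d}(\mathcal{W}_i^N,\mathcal{R}_u(i\tau))\le D_2\tau$, $\mathfrak{d}(\Lambda_i^N,\mathcal{R}(i\tau))\le D_3\tau$, and $\mathfrak{d}\bigl(\bigcup_{i=0}^N\Lambda_i^N,\mathcal{R}([0,T])\bigr)\le D_4\tau$.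
   Context: A norm $\|\cdot\|$ is fixed on each $\mathbb{R}^k$, $\mathbf{B}_k$ is its closed unit ball, matrices carry induced norms, $G^\dagger$ is the Moore–Penrose inverse, $\rho(A)$ the spectral radius. $\mathfrak{d}$ is the Hausdorff distance: $\mathfrak{d}(\Omega,\Gamma)=\inf\{\varepsilon>0:\Omega\subseteq\Gamma+\varepsilon\mathbf{B}_n,\ \Gamma\subseteq\Omega+\varepsilon\mathbf{B}_n\}$. $\mathbb{A}_n$ is the collection of sets $c+G\mathbf{B}_p$, $c\in\mathbb{R}^n$, $G\in\mathbb{R}^{n\times p}$, $\mathrm{rank}(G)=n$, each regarded with its representation $(c,G)$. Set-valued integral $\int_0^tF(s)W\,\mathrm{d}s=\bigcup_w\int_0^tF(s)w(s)\,\mathrm{d}s$ over measurable $w:[0,t]\to W$. $\mathcal{R}_h(t)=\mathrm{e}^{tA}X_0$, $\mathcal{R}_u(t)=\int_0^t\mathrm{e}^{sA}U\,\mathrm{d}s$, $\mathcal{R}(t)=\mathcal{R}_h(t)+\mathcal{R}_u(t)$, $\mathcal{R}([0,T])=\bigcup_{t\in[0,T]}\mathcal{R}(t)$. $\mathbb{I}=\{t\ge0:\int_0^t\mathrm{e}^{sA}\mathrm{d}s\text{ invertible}\}$. $\mathcal{L}(t,k)=\sum_{j=0}^{k-1}(tA)^j/j!$, $\mathcal{T}(t,k)=\sum_{j=0}^{k-1}t^{j+1}A^j/(j+1)!$, $\theta(r,k)=\sum_{j=k}^\infty r^j/j!$. For $\Omega=c+G\mathbf{B}_p$: $\lambda(t,\Omega,k)=\dfrac{1-\mathrm{e}^{t\|A\|}\theta(t\|A\|,k)\|G^\dagger\|\|c\|}{1+\mathrm{e}^{t\|A\|}\theta(t\|A\|,k)\|G^\dagger\|\|G\|}$;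 $k_{\min}(t)=\min\{k\in\mathbb{N}:\theta(t\rho(A),k)\mathrm{e}^{t\rho(A)}<1\}$; $\kappa(t,\Omega,\epsilon)=\min\{k\in\mathbb{N}: k\ge\max(k_{\min}(t),2),\ \lambda(t,\Omega,k)>\epsilon\}$; $\eta(t,\Omega,\epsilon)=\min\{k\in\mathbb{N}:\lambda(t,\Omega,k)>\epsilon,\ \mathcal{T}(t,k)\text{ invertible}\}$ ($t\in\mathbb{I}$). $\mathcal{H}(t,\Omega,\epsilon)=\mathcal{L}(t,\kappa)[c+\lambda(t,\Omega,\kappa)G\mathbf{B}_p]$ with $\kappa=\kappa(t,\Omega,\epsilon)$, represented with center $\mathcal{L}(t,\kappa)c$ and generator matrix $\lambda(t,\Omega,\kappa)\mathcal{L}(t,\kappa)G$; $\mathcal{I}(t,\Omega,\epsilon)=\mathcal{T}(t,\eta)[c+\lambda(t,\Omega,\eta)G\mathbf{B}_p]$ with $\eta=\eta(t,\Omega,\epsilon)$, represented with center $\mathcal{T}(t,\eta)c$ and generator matrix $\lambda(t,\Omega,\eta)\mathcal{T}(t,\eta)G$. *)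

theory Defs
  imports "HOL-Analysis.Analysis"
begin

(* Matrices are real^'k^'m (m rows, k columns); dimensions are finite types.
   The norms on the spaces involved are arbitrary norms, passed as parameters. *)

definition is_norm :: "('a::real_vector \<Rightarrow> real) \<Rightarrow> bool" where
  "is_norm f \<longleftrightarrow> (\<forall>x. 0 \<le> f x) \<and> (\<forall>x. f x = 0 \<longleftrightarrow> x = 0)
     \<and> (\<forall>a x. f (a *\<^sub>R x) = \<bar>a\<bar> * f x) \<and> (\<forall>x y. f (x + y) \<le> f x + f y)"

text \<open>Closed unit ball of a norm.\<close>
definition nball :: "('a::real_vector \<Rightarrow> real) \<Rightarrow> 'a set" where
  "nball nr = {x. nr x \<le> 1}"

text \<open>Induced (operator) norm of a matrix M : R^k -> R^m.\<close>
definition opnorm :: "(real^'m \<Rightarrow> real) \<Rightarrow> (real^'k \<Rightarrow> real) \<Rightarrow> real^'k^'m \<Rightarrow> real" where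
  "opnorm nm nk M = Sup {nm (M *v x) | x. nk x \<le> 1}"

text \<open>Hausdorff distance w.r.t. the norm nr.\<close>
definition hausd :: "(real^'n \<Rightarrow> real) \<Rightarrow> (real^'n) set \<Rightarrow> (real^'n) set \<Rightarrow> real" where
  "hausd nr \<Omega> \<Gamma> = Inf {\<epsilon>. \<epsilon> > 0 \<and>
      \<Omega> \<subseteq> {g + \<epsilon> *\<^sub>R b | g b. g \<in> \<Gamma> \<and> b \<in> nball nr} \<and>
      \<Gamma> \<subseteq> {w + \<epsilon> *\<^sub>R b | w b. w \<in> \<Omega> \<and> b \<in> nball nr}}"

definition msum :: "('a::plus) set \<Rightarrow> 'a set \<Rightarrow> 'a set" where
  "msum X Y = {x + y | x y. x \<in> X \<and> y \<in> Y}"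

fun matpow :: "real^'n^'n \<Rightarrow> nat \<Rightarrow> real^'n^'n" where
  "matpow M 0 = mat 1"
| "matpow M (Suc j) = M ** matpow M j"

definition mexp :: "real^'n^'n \<Rightarrow> real^'n^'n" where
  "mexp M = (\<Sum>j. (1 / fact j) *\<^sub>R matpow M j)"

text \<open>Moore--Penrose inverse (the unique matrix satisfying the Penrose equations).\<close>
definition pinv :: "real^'p^'n \<Rightarrow> real^'n^'p" where
  "pinv G = (THE X. G ** X ** G = G \<and> X ** G ** X = X \<and>
                    transpose (G ** X) = G ** X \<and> transpose (X ** G) = X ** G)"

text \<open>Spectral radius: largest modulus of a (complex) eigenvalue.\<close>
definition spec_rad :: "real^'n^'n \<Rightarrow> real" where
  "spec_rad A = Max {cmod z | z. det (mat z - (\<chi> i j. complex_of_real (A $ i $ j))) = 0}"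

text \<open>Zonotope-like set c + G B_p given by a representation (c,G).\<close>
definition zset :: "(real^'p \<Rightarrow> real) \<Rightarrow> (real^'n) \<times> (real^'p^'n) \<Rightarrow> (real^'n) set" where
  "zset np r = {fst r + snd r *v b | b. b \<in> nball np}"

definition Lmat :: "real^'n^'n \<Rightarrow> real \<Rightarrow> nat \<Rightarrow> real^'n^'n" where
  "Lmat A t k = (\<Sum>j<k. (1 / fact j) *\<^sub>R matpow (t *\<^sub>R A) j)"

definition Tmat :: "real^'n^'n \<Rightarrow> real \<Rightarrow> nat \<Rightarrow> real^'n^'n" where
  "Tmat A t k = (\<Sum>j<k. (t ^ (j + 1) / fact (j + 1)) *\<^sub>R matpow A j)"

definition theta :: "real \<Rightarrow> nat \<Rightarrow> real" where
  "theta r k = (\<Sum>j. r ^ (j + k) / fact (j + k))"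

definition lam :: "(real^'n \<Rightarrow> real) \<Rightarrow> (real^'p \<Rightarrow> real) \<Rightarrow> real^'n^'n \<Rightarrow> real
                    \<Rightarrow> (real^'n) \<times> (real^'p^'n) \<Rightarrow> nat \<Rightarrow> real" where
  "lam nn np A t r k =
     (let a = t * opnorm nn nn A; e = exp a * theta a k in
      (1 - e * opnorm np nn (pinv (snd r)) * nn (fst r)) /
      (1 + e * opnorm np nn (pinv (snd r)) * opnorm nn np (snd r)))"

definition kmin :: "real^'n^'n \<Rightarrow> real \<Rightarrow> nat" where
  "kmin A t = (LEAST k. theta (t * spec_rad A) k * exp (t * spec_rad A) < 1)"

definition kappa :: "(real^'n \<Rightarrow> real) \<Rightarrow> (real^'p \<Rightarrow> real) \<Rightarrow> real^'n^'n \<Rightarrow> real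
                    \<Rightarrow> (real^'n) \<times> (real^'p^'n) \<Rightarrow> real \<Rightarrow> nat" where
  "kappa nn np A t r \<epsilon> = (LEAST k. k \<ge> max (kmin A t) 2 \<and> lam nn np A t r k > \<epsilon>)"

definition eta :: "(real^'n \<Rightarrow> real) \<Rightarrow> (real^'p \<Rightarrow> real) \<Rightarrow> real^'n^'n \<Rightarrow> real
                    \<Rightarrow> (real^'n) \<times> (real^'p^'n) \<Rightarrow> real \<Rightarrow> nat" where
  "eta nn np A t r \<epsilon> = (LEAST k. lam nn np A t r k > \<epsilon> \<and> invertible (Tmat A t k))"

text \<open>Representations (center, generator matrix) of H(t,Omega,eps) and I(t,Omega,eps).\<close>
definition Hrep :: "(real^'n \<Rightarrow> real) \<Rightarrow> (real^'p \<Rightarrow> real) \<Rightarrow> real^'n^'n \<Rightarrow> real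
                    \<Rightarrow> real \<Rightarrow> (real^'n) \<times> (real^'p^'n) \<Rightarrow> (real^'n) \<times> (real^'p^'n)" where
  "Hrep nn np A t \<epsilon> r =
     (let k = kappa nn np A t r \<epsilon> in
      (Lmat A t k *v fst r, lam nn np A t r k *\<^sub>R (Lmat A t k ** snd r)))"

definition Irep :: "(real^'n \<Rightarrow> real) \<Rightarrow> (real^'p \<Rightarrow> real) \<Rightarrow> real^'n^'n \<Rightarrow> real
                    \<Rightarrow> real \<Rightarrow> (real^'n) \<times> (real^'p^'n) \<Rightarrow> (real^'n) \<times> (real^'p^'n)" where
  "Irep nn np A t \<epsilon> r =
     (let k = eta nn np A t r \<epsilon> in
      (Tmat A t k *v fst r, lam nn np A t r k *\<^sub>R (Tmat A t k ** snd r)))"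

text \<open>The set I of t with invertible integral of e^{sA} over [0,t].\<close>
definition Iset :: "real^'n^'n \<Rightarrow> real set" where
  "Iset A = {t. t \<ge> 0 \<and> invertible (integral {0..t} (\<lambda>s. mexp (s *\<^sub>R A)))}"

definition Rh :: "real^'n^'n \<Rightarrow> (real^'n) set \<Rightarrow> real \<Rightarrow> (real^'n) set" where
  "Rh A X0 t = (\<lambda>x. mexp (t *\<^sub>R A) *v x) ` X0"

definition Ru :: "real^'n^'n \<Rightarrow> (real^'n) set \<Rightarrow> real \<Rightarrow> (real^'n) set" where
  "Ru A U t = {integral {0..t} (\<lambda>s. mexp (s *\<^sub>R A) *v w s) | w.
                 w measurable_on {0..t} \<and> (\<forall>s\<in>{0..t}. w s \<in> U)}"

definition Rt :: "real^'n^'n \<Rightarrow> (real^'n) set \<Rightarrow> (real^'n) set \<Rightarrow> real \<Rightarrow> (real^'n) set" where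
  "Rt A X0 U t = msum (Rh A X0 t) (Ru A U t)"

definition Rint :: "real^'n^'n \<Rightarrow> (real^'n) set \<Rightarrow> (real^'n) set \<Rightarrow> real \<Rightarrow> (real^'n) set" where
  "Rint A X0 U T = (\<Union>t\<in>{0..T}. Rt A X0 U t)"

text \<open>The scheme: S_i, V_i (representations), W_i, Lambda_i (sets).\<close>
definition Srep :: "(real^'n \<Rightarrow> real) \<Rightarrow> (real^'p \<Rightarrow> real) \<Rightarrow> real^'n^'n \<Rightarrow> real \<Rightarrow> nat
                    \<Rightarrow> (real^'n) \<times> (real^'p^'n) \<Rightarrow> nat \<Rightarrow> (real^'n) \<times> (real^'p^'n)" where
  "Srep nn np A T N X0 i =
     ((Hrep nn np A (T / real N) (1 - 1 / (real N)^2)) ^^ i) X0"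

definition Vrep :: "(real^'n \<Rightarrow> real) \<Rightarrow> (real^'q \<Rightarrow> real) \<Rightarrow> real^'n^'n \<Rightarrow> real \<Rightarrow> nat
                    \<Rightarrow> (real^'n) \<times> (real^'q^'n) \<Rightarrow> nat \<Rightarrow> (real^'n) \<times> (real^'q^'n)" where
  "Vrep nn nq A T N U i =
     ((Hrep nn nq A (T / real N) (1 - 1 / (real N)^2)) ^^ i)
       (Irep nn nq A (T / real N) (1 - 1 / real N) U)"

fun Wset :: "(real^'n \<Rightarrow> real) \<Rightarrow> (real^'q \<Rightarrow> real) \<Rightarrow> real^'n^'n \<Rightarrow> real \<Rightarrow> nat
                    \<Rightarrow> (real^'n) \<times> (real^'q^'n) \<Rightarrow> nat \<Rightarrow> (real^'n) set" where
  "Wset nn nq A T N U 0 = {0}"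
| "Wset nn nq A T N U (Suc i) = msum (Wset nn nq A T N U i) (zset nq (Vrep nn nq A T N U i))"

definition Lset :: "(real^'n \<Rightarrow> real) \<Rightarrow> (real^'p \<Rightarrow> real) \<Rightarrow> (real^'q \<Rightarrow> real) \<Rightarrow> real^'n^'n
                    \<Rightarrow> real \<Rightarrow> nat \<Rightarrow> (real^'n) \<times> (real^'p^'n) \<Rightarrow> (real^'n) \<times> (real^'q^'n) \<Rightarrow> nat \<Rightarrow> (real^'n) set" where
  "Lset nn np nq A T N X0 U i = msum (zset np (Srep nn np A T N X0 i)) (Wset nn nq A T N U i)"

end

theory Submission
  imports Defs
begin

(* ---- part A ---- *)

lemma is_normD:
  assumes "is_norm f"
  shows "f x \<ge> 0" "f x = 0 \<longleftrightarrow> x = 0" "f (a *\<^sub>R x) = \<bar>a\<bar> * f x" "f (x + y) \<le> f x + f y"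
  using assms unfolding is_norm_def by blast+

lemma is_norm_minus: assumes "is_norm f" shows "f (- x) = f x"
  using is_normD(3)[OF assms, of "-1" x] by simp

lemma is_norm_diff_commute: assumes "is_norm f" shows "f (x - y) = f (y - x)"
  using is_norm_minus[OF assms, of "x - y"] by simp

lemma is_norm_sum: assumes "is_norm f" shows "f (sum g I) \<le> (\<Sum>i\<in>I. f (g i))"
proof (induct I rule: infinite_finite_induct)
  case (infinite A) then show ?case using is_normD(2)[OF assms, of 0] by simp
next
  case empty then show ?case using is_normD(2)[OF assms, of 0] by simp
next
  case (insert x F) then show ?case using is_normD(4)[OF assms, of "g x" "sum g F"] by simp
qed

lemma norm_upper:
  fixes nr :: "real^'k \<Rightarrow> real"
  assumes "is_norm nr"
  shows "\<exists>C\<ge>0. \<forall>x. nr x \<le> C * norm x"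
proof -
  define C where "C = (\<Sum>i\<in>UNIV. nr (axis i 1))"
  have C0: "C \<ge> 0" unfolding C_def by (rule sum_nonneg) (simp add: is_normD(1)[OF assms])
  have "nr x \<le> C * norm x" for x
  proof -
    have "x = (\<Sum>i\<in>UNIV. (x $ i) *\<^sub>R axis i 1)"
      by (simp add: vec_eq_iff axis_def if_distrib cong: if_cong)
    then have "nr x = nr (\<Sum>i\<in>UNIV. (x $ i) *\<^sub>R axis i 1)" by simp
    also have "\<dots> \<le> (\<Sum>i\<in>UNIV. nr ((x $ i) *\<^sub>R axis i (1::real)))" by (rule is_norm_sum[OF assms])
    also have "\<dots> = (\<Sum>i\<in>UNIV. \<bar>x $ i\<bar> * nr (axis i 1))" by (simp add: is_normD(3)[OF assms])
    also have "\<dots> \<le> (\<Sum>i\<in>UNIV. norm x * nr (axis i 1))"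
      by (rule sum_mono, rule mult_right_mono) (auto simp: component_le_norm_cart is_normD(1)[OF assms])
    also have "\<dots> = C * norm x" by (simp add: C_def sum_distrib_left mult.commute)
    finally show ?thesis .
  qed
  with C0 show ?thesis by blast
qed

lemma norm_cont:
  fixes nr :: "real^'k \<Rightarrow> real"
  assumes "is_norm nr"
  shows "continuous_on UNIV nr"
proof -
  obtain C where C: "C \<ge> 0" "\<And>x. nr x \<le> C * norm x" using norm_upper[OF assms] by blast
  have "\<bar>nr x - nr y\<bar> \<le> C * norm (x - y)" for x y
  proof -
    have "nr x \<le> nr y + nr (x - y)" using is_normD(4)[OF assms, of y "x - y"] by simp
    moreover have "nr y \<le> nr x + nr (x - y)"
      using is_normD(4)[OF assms, of x "y - x"] is_norm_diff_commute[OF assms, of x y] by simp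
    ultimately show ?thesis using C(2)[of "x - y"] by linarith
  qed
  then show ?thesis
  proof (unfold continuous_on_iff, intro ballI allI impI)
    fix x e assume "x \<in> (UNIV::(real^'k) set)" "(e::real) > 0"
    show "\<exists>d>0. \<forall>x'\<in>UNIV. dist x' x < d \<longrightarrow> dist (nr x') (nr x) < e"
    proof (intro exI[of _ "e / (C + 1)"] conjI ballI impI)
      show "e / (C + 1) > 0" using \<open>e > 0\<close> C(1) by simp
      fix x' assume "dist x' x < e / (C + 1)"
      then have "norm (x' - x) * (C + 1) < e" using C(1) by (simp add: dist_norm pos_less_divide_eq)
      moreover have "\<bar>nr x' - nr x\<bar> \<le> C * norm (x' - x)" by fact
      moreover have "C * norm (x' - x) \<le> norm (x' - x) * (C + 1)" by (simp add: algebra_simps)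
      ultimately show "dist (nr x') (nr x) < e" by (simp add: dist_real_def)
    qed
  qed
qed

lemma norm_lower:
  fixes nr :: "real^'k \<Rightarrow> real"
  assumes "is_norm nr"
  shows "\<exists>c>0. \<forall>x. norm x \<le> c * nr x"
proof -
  let ?S = "sphere (0::real^'k) 1"
  have "axis undefined 1 \<in> ?S" by (simp add: norm_axis_1)
  then have "?S \<noteq> {}" by blast
  moreover have "compact ?S" by simp
  moreover have "continuous_on ?S nr" using norm_cont[OF assms] continuous_on_subset by blast
  ultimately obtain x0 where x0: "x0 \<in> ?S" "\<And>y. y \<in> ?S \<Longrightarrow> nr x0 \<le> nr y"
    using continuous_attains_inf[of ?S nr] by auto
  have "x0 \<noteq> 0" using x0(1) by auto
  then have m: "nr x0 > 0" using is_normD(1,2)[OF assms, of x0] by auto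
  have "norm x \<le> (1 / nr x0) * nr x" for x
  proof (cases "x = 0")
    case True then show ?thesis using is_normD(2)[OF assms, of 0] by simp
  next
    case False
    have "(1 / norm x) *\<^sub>R x \<in> ?S" using False by simp
    then have "nr x0 \<le> nr ((1 / norm x) *\<^sub>R x)" by (rule x0(2))
    also have "\<dots> = nr x / norm x" by (simp add: is_normD(3)[OF assms])
    finally have "nr x0 * norm x \<le> nr x" using False by (simp add: pos_le_divide_eq)
    then show ?thesis using m by (simp add: field_simps)
  qed
  then show ?thesis using m by (intro exI[of _ "1 / nr x0"]) auto
qed

definition close :: "real \<Rightarrow> ('a::real_normed_vector) set \<Rightarrow> 'a set \<Rightarrow> bool" where
  "close d X Y \<longleftrightarrow> (\<forall>x\<in>X. \<exists>y\<in>Y. norm (x - y) \<le> d) \<and> (\<forall>y\<in>Y. \<exists>x\<in>X. norm (x - y) \<le> d)"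

lemma hausd_le_nr:
  fixes nr :: "real^'n \<Rightarrow> real"
  assumes nr: "is_norm nr" and d: "d \<ge> 0"
    and h1: "\<And>x. x \<in> X \<Longrightarrow> \<exists>y\<in>Y. nr (x - y) \<le> d"
    and h2: "\<And>y. y \<in> Y \<Longrightarrow> \<exists>x\<in>X. nr (x - y) \<le> d"
  shows "hausd nr X Y \<le> d"
proof -
  define S where "S = {\<epsilon>. \<epsilon> > 0 \<and>
      X \<subseteq> {g + \<epsilon> *\<^sub>R b | g b. g \<in> Y \<and> b \<in> nball nr} \<and>
      Y \<subseteq> {w + \<epsilon> *\<^sub>R b | w b. w \<in> X \<and> b \<in> nball nr}}"
  have inS: "e \<in> S" if e: "e > d" for e
  proof -
    have e0: "e > 0" using e d by simp
    have "X \<subseteq> {g + e *\<^sub>R b | g b. g \<in> Y \<and> b \<in> nball nr}"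
    proof
      fix x assume "x \<in> X"
      then obtain y where y: "y \<in> Y" "nr (x - y) \<le> d" using h1 by blast
      have "nr ((1/e) *\<^sub>R (x - y)) \<le> 1"
        using y(2) e e0 by (simp add: is_normD(3)[OF nr] divide_le_eq_1)
      then show "x \<in> {g + e *\<^sub>R b | g b. g \<in> Y \<and> b \<in> nball nr}"
        using y(1) e0 by (intro CollectI exI[of _ y] exI[of _ "(1/e) *\<^sub>R (x - y)"]) (auto simp: nball_def)
    qed
    moreover have "Y \<subseteq> {w + e *\<^sub>R b | w b. w \<in> X \<and> b \<in> nball nr}"
    proof
      fix y assume "y \<in> Y"
      then obtain x where x: "x \<in> X" "nr (x - y) \<le> d" using h2 by blast
      have "nr ((1/e) *\<^sub>R (y - x)) \<le> 1"
        using x(2) e e0 is_norm_diff_commute[OF nr, of x y] by (simp add: is_normD(3)[OF nr] divide_le_eq_1)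
      then show "y \<in> {w + e *\<^sub>R b | w b. w \<in> X \<and> b \<in> nball nr}"
        using x(1) e0 by (intro CollectI exI[of _ x] exI[of _ "(1/e) *\<^sub>R (y - x)"]) (auto simp: nball_def)
    qed
    ultimately show ?thesis using e0 unfolding S_def by blast
  qed
  have bdd: "bdd_below S" unfolding S_def by (rule bdd_belowI[of _ 0]) auto
  show ?thesis
  proof (rule ccontr)
    assume "\<not> hausd nr X Y \<le> d"
    then have lt: "d < Inf S" unfolding hausd_def S_def by simp
    have "(d + Inf S) / 2 \<in> S" using lt by (intro inS) simp
    then have "Inf S \<le> (d + Inf S) / 2" using bdd by (rule cInf_lower)
    then show False using lt by simp
  qed
qed

lemma hausd_le_close:
  fixes nr :: "real^'n \<Rightarrow> real"
  assumes nr: "is_norm nr" and C: "C \<ge> 0" "\<And>x. nr x \<le> C * norm x" and d: "d \<ge> 0"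
    and cl: "close d X Y"
  shows "hausd nr X Y \<le> C * d"
proof (rule hausd_le_nr[OF nr])
  show "0 \<le> C * d" using C d by simp
  fix x assume "x \<in> X"
  then obtain y where "y \<in> Y" "norm (x - y) \<le> d" using cl unfolding close_def by blast
  then show "\<exists>y\<in>Y. nr (x - y) \<le> C * d" using C(2)[of "x - y"] mult_left_mono[OF _ C(1)] by (meson order_trans)
next
  fix y assume "y \<in> Y"
  then obtain x where "x \<in> X" "norm (x - y) \<le> d" using cl unfolding close_def by blast
  then show "\<exists>x\<in>X. nr (x - y) \<le> C * d" using C(2)[of "x - y"] mult_left_mono[OF _ C(1)] by (meson order_trans)
qed

lemma close_mono: "close d X Y \<Longrightarrow> d \<le> d' \<Longrightarrow> close d' X Y"
  unfolding close_def by (meson order_trans)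

lemma close_msum: assumes c1: "close d1 X1 Y1" and c2: "close d2 X2 Y2"
  shows "close (d1 + d2) (msum X1 X2) (msum Y1 Y2)"
proof -
  have t: "norm ((a + b) - (c + d)) \<le> d1 + d2" if "norm (a - c) \<le> d1" "norm (b - d) \<le> d2" for a b c d :: 'a
    using norm_triangle_ineq[of "a - c" "b - d"] that by (simp add: algebra_simps)
  show ?thesis unfolding close_def msum_def
  proof (intro conjI ballI)
    fix z assume "z \<in> {x + y |x y. x \<in> X1 \<and> y \<in> X2}"
    then obtain x y where z: "z = x + y" "x \<in> X1" "y \<in> X2" by blast
    obtain x' where "x' \<in> Y1" "norm (x - x') \<le> d1" using c1 z(2) unfolding close_def by blast
    moreover obtain y' where "y' \<in> Y2" "norm (y - y') \<le> d2" using c2 z(3) unfolding close_def by blast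
    ultimately show "\<exists>y\<in>{x + y |x y. x \<in> Y1 \<and> y \<in> Y2}. norm (z - y) \<le> d1 + d2"
      using z(1) t by blast
  next
    fix z assume "z \<in> {x + y |x y. x \<in> Y1 \<and> y \<in> Y2}"
    then obtain x y where z: "z = x + y" "x \<in> Y1" "y \<in> Y2" by blast
    obtain x' where "x' \<in> X1" "norm (x' - x) \<le> d1" using c1 z(2) unfolding close_def by blast
    moreover obtain y' where "y' \<in> X2" "norm (y' - y) \<le> d2" using c2 z(3) unfolding close_def by blast
    ultimately show "\<exists>x\<in>{x + y |x y. x \<in> X1 \<and> y \<in> X2}. norm (x - z) \<le> d1 + d2"
      using z(1) t by blast
  qed
qed

lemma onorm_mv: "norm (M *v x) \<le> onorm ((*v) M) * norm (x::real^'k)"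
  for M :: "real^'k^'m"
  using onorm[OF matrix_vector_mul_bounded_linear] by blast

lemma opnorm_props:
  fixes nm :: "real^'m \<Rightarrow> real" and nk :: "real^'k \<Rightarrow> real" and M :: "real^'k^'m"
  assumes nm: "is_norm nm" and nk: "is_norm nk"
  shows "opnorm nm nk M \<ge> 0" "nm (M *v x) \<le> opnorm nm nk M * nk x"
proof -
  obtain Cm where Cm: "Cm \<ge> 0" "\<And>x. nm x \<le> Cm * norm x" using norm_upper[OF nm] by blast
  obtain ck where ck: "ck > 0" "\<And>x. norm x \<le> ck * nk x" using norm_lower[OF nk] by blast
  define S where "S = {nm (M *v x) | x. nk x \<le> 1}"
  have bdd: "bdd_above S"
  proof (rule bdd_aboveI[of _ "Cm * (onorm ((*v) M) * ck)"])
    fix s assume "s \<in> S"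
    then obtain y where y: "s = nm (M *v y)" "nk y \<le> 1" unfolding S_def by blast
    have o0: "onorm ((*v) M) \<ge> 0" by (rule onorm_pos_le[OF matrix_vector_mul_bounded_linear])
    have "norm (M *v y) \<le> onorm ((*v) M) * norm y" by (rule onorm_mv)
    also have "\<dots> \<le> onorm ((*v) M) * (ck * nk y)" using ck(2)[of y] o0 by (simp add: mult_left_mono)
    also have "\<dots> \<le> onorm ((*v) M) * ck" using y(2) o0 ck(1) by (simp add: mult_left_le mult_left_mono)
    finally have "nm (M *v y) \<le> Cm * (onorm ((*v) M) * ck)"
      using Cm mult_left_mono order_trans by blast
    then show "s \<le> Cm * (onorm ((*v) M) * ck)" using y(1) by simp
  qed
  have z: "nm (M *v 0) \<in> S" unfolding S_def using is_normD(2)[OF nk, of 0] by (intro CollectI exI[of _ 0]) auto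
  have "0 \<le> nm (M *v 0)" by (rule is_normD(1)[OF nm])
  also have "\<dots> \<le> Sup S" using z bdd by (rule cSup_upper)
  finally show op0: "opnorm nm nk M \<ge> 0" unfolding opnorm_def S_def .
  show "nm (M *v x) \<le> opnorm nm nk M * nk x"
  proof (cases "x = 0")
    case True then show ?thesis using is_normD(2)[OF nm, of 0] is_normD(2)[OF nk, of 0] by simp
  next
    case False
    then have nx: "nk x > 0" using is_normD(1,2)[OF nk, of x] by auto
    have "nk ((1 / nk x) *\<^sub>R x) \<le> 1" using nx by (simp add: is_normD(3)[OF nk])
    then have "nm (M *v ((1 / nk x) *\<^sub>R x)) \<in> S" unfolding S_def by blast
    then have "nm (M *v ((1 / nk x) *\<^sub>R x)) \<le> Sup S" using bdd by (intro cSup_upper)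
    moreover have "nm (M *v ((1 / nk x) *\<^sub>R x)) = nm (M *v x) / nk x"
      using nx by (simp add: matrix_vector_mult_scaleR is_normD(3)[OF nm])
    ultimately show ?thesis using nx unfolding opnorm_def S_def by (simp add: pos_divide_le_eq)
  qed
qed


(* ---- part B ---- *)

definition bnd :: "real^'k^'m \<Rightarrow> real \<Rightarrow> bool" where
  "bnd M b \<longleftrightarrow> (\<forall>x. norm (M *v x) \<le> b * norm x)"

lemma bndD: "bnd M b \<Longrightarrow> norm (M *v x) \<le> b * norm x" unfolding bnd_def by blast

lemma bnd_onorm: "bnd M (onorm ((*v) M))" unfolding bnd_def using onorm_mv by blast

lemma bnd_mono: "bnd M b \<Longrightarrow> b \<le> b' \<Longrightarrow> bnd M b'"
  unfolding bnd_def by (meson mult_right_mono norm_ge_zero order_trans)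

lemma bnd_nonneg: "bnd (M::real^'k^'m) b \<Longrightarrow> b \<ge> 0"
proof -
  assume "bnd M b"
  then have "norm (M *v axis undefined 1) \<le> b * norm (axis undefined (1::real) :: real^'k)" by (rule bndD)
  then show "b \<ge> 0" by (simp add: norm_axis_1) (smt (verit) norm_ge_zero)
qed

lemma bnd_mult: "bnd M a \<Longrightarrow> bnd P b \<Longrightarrow> bnd (M ** P) (a * b)"
proof -
  assume M: "bnd M a" and P: "bnd P b"
  have a0: "a \<ge> 0" by (rule bnd_nonneg[OF M])
  show ?thesis unfolding bnd_def
  proof
    fix x
    have "norm ((M ** P) *v x) = norm (M *v (P *v x))" by (simp add: matrix_vector_mul_assoc)
    also have "\<dots> \<le> a * norm (P *v x)" by (rule bndD[OF M])
    also have "\<dots> \<le> a * (b * norm x)" using bndD[OF P] a0 by (simp add: mult_left_mono)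
    finally show "norm ((M ** P) *v x) \<le> a * b * norm x" by simp
  qed
qed

lemma bnd_add: assumes "bnd M a" "bnd P b" shows "bnd (M + P) (a + b)"
  unfolding bnd_def
proof
  fix x
  have "norm ((M + P) *v x) \<le> norm (M *v x) + norm (P *v x)"
    by (simp add: matrix_vector_mult_add_rdistrib norm_triangle_ineq)
  also have "\<dots> \<le> a * norm x + b * norm x" using bndD[OF assms(1)] bndD[OF assms(2)] by (rule add_mono)
  finally show "norm ((M + P) *v x) \<le> (a + b) * norm x" by (simp add: algebra_simps)
qed

lemma bnd_diff: assumes "bnd M a" "bnd P b" shows "bnd (M - P) (a + b)"
  unfolding bnd_def
proof
  fix x
  have "norm ((M - P) *v x) \<le> norm (M *v x) + norm (P *v x)"
    by (simp add: matrix_vector_mult_diff_rdistrib norm_triangle_ineq4)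
  also have "\<dots> \<le> a * norm x + b * norm x" using bndD[OF assms(1)] bndD[OF assms(2)] by (rule add_mono)
  finally show "norm ((M - P) *v x) \<le> (a + b) * norm x" by (simp add: algebra_simps)
qed

lemma bnd_scaleR: "bnd M a \<Longrightarrow> bnd (c *\<^sub>R M) (\<bar>c\<bar> * a)"
  unfolding bnd_def by (simp add: scaleR_matrix_vector_assoc[symmetric] mult.assoc mult_left_mono)

lemma bnd_id: "bnd (mat 1 :: real^'n^'n) 1" unfolding bnd_def by simp

lemma bnd_zero: "bnd (0 :: real^'k^'m) 0" unfolding bnd_def by simp

lemma bnd_entry: assumes "bnd M b" shows "\<bar>M $ i $ j\<bar> \<le> b"
proof -
  have "\<bar>M $ i $ j\<bar> = \<bar>(M *v axis j 1) $ i\<bar>"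
    by (simp add: matrix_vector_mult_def axis_def if_distrib cong: if_cong)
  also have "\<dots> \<le> norm (M *v axis j 1)" by (rule component_le_norm_cart)
  also have "\<dots> \<le> b" using bndD[OF assms, of "axis j 1"] by (simp add: norm_axis_1)
  finally show ?thesis .
qed

lemma bnd_norm: assumes "bnd (M::real^'k^'m) b" shows "norm M \<le> real CARD('m) * real CARD('k) * b"
proof -
  have "norm M \<le> (\<Sum>i\<in>UNIV. norm (M $ i))" unfolding norm_vec_def by (rule L2_set_le_sum) auto
  also have "\<dots> \<le> (\<Sum>i\<in>(UNIV::'m set). \<Sum>j\<in>(UNIV::'k set). \<bar>M $ i $ j\<bar>)"
    by (rule sum_mono) (rule norm_le_l1_cart)
  also have "\<dots> \<le> (\<Sum>i\<in>(UNIV::'m set). \<Sum>j\<in>(UNIV::'k set). b)"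
    by (intro sum_mono bnd_entry[OF assms])
  finally show ?thesis by simp
qed

lemma matpow_add: "matpow M (i + j) = matpow M i ** matpow M j"
  by (induct i) (simp_all add: matrix_mul_assoc)

lemma matpow_scaleR: "matpow (c *\<^sub>R M) j = (c ^ j) *\<^sub>R matpow M j"
  by (induct j) (simp_all add: scalar_matrix_assoc[symmetric] matrix_scalar_ac)

lemma matpow_commute: "M ** matpow M j = matpow M j ** M"
  using matpow_add[of M j 1] matpow_add[of M 1 j] by simp

lemma bnd_matpow: "bnd M a \<Longrightarrow> bnd (matpow M j) (a ^ j)"
  by (induct j) (simp_all add: bnd_id bnd_mult)

lemma bnd_sum: "(\<And>j. j \<in> J \<Longrightarrow> bnd (F j) (b j)) \<Longrightarrow> bnd (sum F J) (sum b J)"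
proof (induct J rule: infinite_finite_induct)
  case (insert x F) then show ?case by (simp add: bnd_add)
qed (simp_all add: bnd_zero)

lemma bounded_linear_mv_left: "bounded_linear (\<lambda>P::real^'k^'m. P *v x)"
proof -
  have "linear (\<lambda>P::real^'k^'m. P *v x)"
    by (rule linearI) (simp_all add: matrix_vector_mult_add_rdistrib scaleR_matrix_vector_assoc)
  then show ?thesis by (simp add: linear_conv_bounded_linear)
qed

lemma bounded_linear_entry: "bounded_linear (\<lambda>P::real^'k^'m. P $ i $ j)"
proof -
  have "linear (\<lambda>P::real^'k^'m. P $ i $ j)" by (rule linearI) simp_all
  then show ?thesis by (simp add: linear_conv_bounded_linear)
qed

lemma sum_mv: "(sum F J) *v x = (\<Sum>j\<in>J. F j *v (x::real^'k))" for F :: "_ \<Rightarrow> real^'k^'m"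
  using real_vector.linear_sum[OF bounded_linear.linear[OF bounded_linear_mv_left], of F J x] by simp

lemma exp_real_sums: "(\<lambda>j. r ^ j / fact j) sums exp (r::real)"
  using exp_converges[of r] by (simp add: divide_inverse_commute)

lemma bnd_series:
  fixes M :: "real^'k^'m"
  assumes s: "\<And>x. (\<lambda>j. F j *v x) sums (M *v x)" and b: "\<And>j. bnd (F j) (b j)" and B: "b sums B"
  shows "bnd M B"
  unfolding bnd_def
proof
  fix x
  have "norm (M *v x) = norm (\<Sum>j. F j *v x)" using s[of x] by (simp add: sums_iff)
  also have "\<dots> \<le> (\<Sum>j. b j * norm x)"
    by (rule norm_suminf_le) (auto intro: bndD[OF b] summable_mult2 sums_summable[OF B])
  also have "\<dots> = B * norm x" using B by (simp add: sums_iff suminf_mult2[symmetric])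
  finally show "norm (M *v x) \<le> B * norm x" .
qed

lemma summable_mexp: "summable (\<lambda>j. (1 / fact j) *\<^sub>R matpow (M::real^'n^'n) j)"
proof -
  let ?a = "onorm ((*v) M)"
  let ?c = "real CARD('n) * real CARD('n)"
  have "bnd ((1 / fact j) *\<^sub>R matpow M j) (\<bar>1 / fact j\<bar> * ?a ^ j)" for j
    by (intro bnd_scaleR bnd_matpow bnd_onorm)
  then have B: "norm ((1 / fact j) *\<^sub>R matpow M j) \<le> ?c * (?a ^ j / fact j)" for j
    using bnd_norm by fastforce
  have S: "summable (\<lambda>j. ?c * (?a ^ j / fact j))"
    by (intro summable_mult sums_summable[OF exp_real_sums])
  show ?thesis by (rule summable_comparison_test'[OF S B])
qed

lemma mexp_mv: "(\<lambda>j. (1 / fact j) *\<^sub>R (matpow M j *v x)) sums (mexp M *v x)"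
proof -
  have "(\<lambda>j. ((1 / fact j) *\<^sub>R matpow M j) *v x) sums (mexp M *v x)"
    unfolding mexp_def by (rule bounded_linear.sums[OF bounded_linear_mv_left summable_sums[OF summable_mexp]])
  then show ?thesis by (simp add: scaleR_matrix_vector_assoc)
qed

lemma bnd_term: assumes "bnd A a" shows "bnd ((1 / fact j) *\<^sub>R matpow (t *\<^sub>R A) j) ((\<bar>t\<bar> * a) ^ j / fact j)"
proof -
  have "bnd ((t ^ j) *\<^sub>R matpow A j) (\<bar>t ^ j\<bar> * a ^ j)" by (intro bnd_scaleR bnd_matpow assms)
  then have "bnd ((1 / fact j) *\<^sub>R ((t ^ j) *\<^sub>R matpow A j)) (\<bar>1 / fact j\<bar> * (\<bar>t ^ j\<bar> * a ^ j))"
    by (rule bnd_scaleR)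
  then show ?thesis by (simp add: matpow_scaleR power_abs power_mult_distrib)
qed

lemma bnd_mexp: assumes "bnd A a" shows "bnd (mexp (t *\<^sub>R A)) (exp (\<bar>t\<bar> * a))"
proof (rule bnd_series[OF _ bnd_term[OF assms] exp_real_sums])
  fix x show "(\<lambda>j. ((1 / fact j) *\<^sub>R matpow (t *\<^sub>R A) j) *v x) sums (mexp (t *\<^sub>R A) *v x)"
    using mexp_mv by (simp add: scaleR_matrix_vector_assoc)
qed

lemma theta_sums: "(\<lambda>j. r ^ (j + k) / fact (j + k)) sums theta r k"
  unfolding theta_def by (rule summable_sums, rule summable_ignore_initial_segment, rule sums_summable[OF exp_real_sums])

lemma theta_nonneg: "r \<ge> 0 \<Longrightarrow> theta r k \<ge> 0"
  using sums_le[OF _ sums_zero theta_sums] by simp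

lemma theta_le: assumes r: "r \<ge> 0" shows "theta r k \<le> r ^ k * exp r"
proof -
  have "r ^ (j + k) / fact (j + k) \<le> r ^ k * (r ^ j / fact j)" for j
  proof -
    have "fact j \<le> (fact (j + k) :: real)" by (rule fact_mono) simp
    then have "r ^ j / fact (j + k) \<le> r ^ j / fact j" using r by (intro divide_left_mono) auto
    then have "r ^ k * (r ^ j / fact (j + k)) \<le> r ^ k * (r ^ j / fact j)" using r by (intro mult_left_mono) auto
    then show ?thesis by (simp add: power_add algebra_simps)
  qed
  then show ?thesis using sums_le[OF _ theta_sums sums_mult[OF exp_real_sums]] by blast
qed

lemma theta_tendsto: "(\<lambda>k. theta r k) \<longlonglongrightarrow> 0"
proof -
  have e: "theta r k = exp r - (\<Sum>j<k. r ^ j / fact j)" for k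
    using suminf_minus_initial_segment[OF sums_summable[OF exp_real_sums], of r k]
      sums_unique[OF exp_real_sums] unfolding theta_def by simp
  have "(\<lambda>k. \<Sum>j<k. r ^ j / fact j) \<longlonglongrightarrow> exp r" using exp_real_sums by (simp add: sums_def)
  then have "(\<lambda>k. exp r - (\<Sum>j<k. r ^ j / fact j)) \<longlonglongrightarrow> exp r - exp r" by (intro tendsto_diff tendsto_const)
  then show ?thesis unfolding e by simp
qed

lemma Lmat_mv: "Lmat A t k *v x = (\<Sum>j<k. ((1 / fact j) *\<^sub>R matpow (t *\<^sub>R A) j) *v x)"
  unfolding Lmat_def by (rule sum_mv)

lemma bnd_mexp_Lmat: assumes "bnd A a" shows "bnd (mexp (t *\<^sub>R A) - Lmat A t k) (theta (\<bar>t\<bar> * a) k)"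
proof (rule bnd_series[OF _ bnd_term[OF assms] theta_sums])
  fix x
  have "(\<lambda>j. ((1 / fact (j + k)) *\<^sub>R matpow (t *\<^sub>R A) (j + k)) *v x) sums
        (mexp (t *\<^sub>R A) *v x - (\<Sum>j<k. ((1 / fact j) *\<^sub>R matpow (t *\<^sub>R A) j) *v x))"
    using sums_split_initial_segment[OF mexp_mv[of "t *\<^sub>R A" x], of k] by (simp add: scaleR_matrix_vector_assoc)
  then show "(\<lambda>j. ((1 / fact (j + k)) *\<^sub>R matpow (t *\<^sub>R A) (j + k)) *v x) sums ((mexp (t *\<^sub>R A) - Lmat A t k) *v x)"
    by (simp add: Lmat_mv matrix_vector_mult_diff_rdistrib)
qed

lemma bnd_Lmat: assumes "bnd A a" shows "bnd (Lmat A t k) (exp (\<bar>t\<bar> * a))"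
proof -
  have a: "a \<ge> 0" by (rule bnd_nonneg[OF assms])
  have "bnd (Lmat A t k) (\<Sum>j<k. (\<bar>t\<bar> * a) ^ j / fact j)"
    unfolding Lmat_def by (intro bnd_sum bnd_term[OF assms])
  moreover have "(\<Sum>j<k. (\<bar>t\<bar> * a) ^ j / fact j) \<le> exp (\<bar>t\<bar> * a)"
    using sum_le_suminf[OF sums_summable[OF exp_real_sums], of "{..<k}" "\<bar>t\<bar> * a"] a
      sums_unique[OF exp_real_sums, of "\<bar>t\<bar> * a"] by simp
  ultimately show ?thesis by (rule bnd_mono)
qed

lemma mexp_entry: "(\<lambda>j. (1 / fact j) * (matpow M j $ i $ l)) sums (mexp M $ i $ l)"
proof -
  have "(\<lambda>j. ((1 / fact j) *\<^sub>R matpow M j) $ i $ l) sums (mexp M $ i $ l)"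
    unfolding mexp_def by (rule bounded_linear.sums[OF bounded_linear_entry summable_sums[OF summable_mexp]])
  then show ?thesis by simp
qed

lemma binom_fact_sum: "(\<Sum>p\<le>k. s ^ p / fact p * (t ^ (k - p) / fact (k - p))) = (s + t) ^ k / fact k" for s t :: real
proof -
  have "(s + t) ^ k = (\<Sum>p\<le>k. of_nat (k choose p) * s ^ p * t ^ (k - p))" by (rule binomial_ring)
  also have "\<dots> = (\<Sum>p\<le>k. fact k * (s ^ p / fact p * (t ^ (k - p) / fact (k - p))))"
    by (rule sum.cong) (auto simp: binomial_fact)
  also have "\<dots> = fact k * (\<Sum>p\<le>k. s ^ p / fact p * (t ^ (k - p) / fact (k - p)))"
    by (simp add: sum_distrib_left)
  finally show ?thesis by simp
qed

lemma mexp_add: "mexp ((s + t) *\<^sub>R A) = mexp (s *\<^sub>R A) ** mexp (t *\<^sub>R (A::real^'n^'n))"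
proof -
  define a where "a = onorm ((*v) A)"
  have bA: "bnd A a" unfolding a_def by (rule bnd_onorm)
  have a0: "a \<ge> 0" by (rule bnd_nonneg[OF bA])
  define \<alpha> where "\<alpha> i m j = (1 / fact j) * (matpow (s *\<^sub>R A) j $ i $ m)" for i m j
  define \<beta> where "\<beta> m l j = (1 / fact j) * (matpow (t *\<^sub>R A) j $ m $ l)" for m l j
  have abs_sum: "summable (\<lambda>j. norm ((1 / fact j) * (matpow (c *\<^sub>R A) j $ i $ m)))" for c i m
  proof (rule summable_comparison_test'[OF sums_summable[OF exp_real_sums[of "\<bar>c\<bar> * a"]], where N=0])
    fix j
    have "\<bar>((1 / fact j) *\<^sub>R matpow (c *\<^sub>R A) j) $ i $ m\<bar> \<le> (\<bar>c\<bar> * a) ^ j / fact j"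
      by (rule bnd_entry[OF bnd_term[OF bA]])
    then show "norm (norm ((1 / fact j) * (matpow (c *\<^sub>R A) j $ i $ m))) \<le> (\<bar>c\<bar> * a) ^ j / fact j" by simp
  qed
  show ?thesis
  proof (rule vec_eq_iff[THEN iffD2, rule_format], rule vec_eq_iff[THEN iffD2, rule_format])
    fix i l
    have "(mexp (s *\<^sub>R A) ** mexp (t *\<^sub>R A)) $ i $ l = (\<Sum>m\<in>UNIV. mexp (s *\<^sub>R A) $ i $ m * mexp (t *\<^sub>R A) $ m $ l)"
      by (simp add: matrix_matrix_mult_def)
    also have "\<dots> = (\<Sum>m\<in>UNIV. (\<Sum>j. \<alpha> i m j) * (\<Sum>j. \<beta> m l j))"
      unfolding \<alpha>_def \<beta>_def by (simp only: sums_unique[OF mexp_entry])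
    also have "\<dots> = (\<Sum>m\<in>UNIV. \<Sum>k. \<Sum>p\<le>k. \<alpha> i m p * \<beta> m l (k - p))"
      by (rule sum.cong[OF refl], rule Cauchy_product) (unfold \<alpha>_def \<beta>_def, rule abs_sum, rule abs_sum)
    also have "\<dots> = (\<Sum>k. \<Sum>m\<in>UNIV. \<Sum>p\<le>k. \<alpha> i m p * \<beta> m l (k - p))"
      by (rule suminf_sum[symmetric], rule summable_Cauchy_product) (unfold \<alpha>_def \<beta>_def, rule abs_sum, rule abs_sum)
    also have "\<dots> = (\<Sum>k. (1 / fact k) * (matpow ((s + t) *\<^sub>R A) k $ i $ l))"
    proof (rule suminf_cong)
      fix k
      have "(\<Sum>m\<in>UNIV. \<Sum>p\<le>k. \<alpha> i m p * \<beta> m l (k - p))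
          = (\<Sum>p\<le>k. (s ^ p / fact p * (t ^ (k - p) / fact (k - p))) * (\<Sum>m\<in>UNIV. matpow A p $ i $ m * matpow A (k - p) $ m $ l))"
        unfolding \<alpha>_def \<beta>_def matpow_scaleR
        by (subst sum.swap) (auto simp: sum_distrib_left intro!: sum.cong)
      also have "\<dots> = (\<Sum>p\<le>k. (s ^ p / fact p * (t ^ (k - p) / fact (k - p))) * (matpow A k $ i $ l))"
      proof (rule sum.cong[OF refl])
        fix p assume "p \<in> {..k}"
        then have "matpow A k = matpow A p ** matpow A (k - p)" using matpow_add[of A p "k - p"] by simp
        then show "(s ^ p / fact p * (t ^ (k - p) / fact (k - p))) * (\<Sum>m\<in>UNIV. matpow A p $ i $ m * matpow A (k - p) $ m $ l)
            = (s ^ p / fact p * (t ^ (k - p) / fact (k - p))) * (matpow A k $ i $ l)"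
          by (simp add: matrix_matrix_mult_def)
      qed
      also have "\<dots> = (s + t) ^ k / fact k * (matpow A k $ i $ l)"
        by (simp only: sum_distrib_right[symmetric] binom_fact_sum)
      finally show "(\<Sum>m\<in>UNIV. \<Sum>p\<le>k. \<alpha> i m p * \<beta> m l (k - p)) = (1 / fact k) * (matpow ((s + t) *\<^sub>R A) k $ i $ l)"
        by (simp add: matpow_scaleR)
    qed
    also have "\<dots> = mexp ((s + t) *\<^sub>R A) $ i $ l" by (simp only: sums_unique[OF mexp_entry])
    finally show "mexp ((s + t) *\<^sub>R A) $ i $ l = (mexp (s *\<^sub>R A) ** mexp (t *\<^sub>R A)) $ i $ l" by simp
  qed
qed

lemma bnd_0_eq: assumes "bnd (M::real^'k^'m) 0" shows "M = 0"
  using bnd_entry[OF assms] by (simp add: vec_eq_iff)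

lemma Lmat_1: "Lmat A t 1 = mat 1" unfolding Lmat_def by simp

lemma theta_le1: "r \<ge> 0 \<Longrightarrow> theta r 1 \<le> r * exp r" using theta_le[of r 1] by simp

lemma mexp_zero: "mexp (0 *\<^sub>R (A::real^'n^'n)) = mat 1"
proof -
  have "bnd (mexp (0 *\<^sub>R A) - Lmat A 0 1) (theta (\<bar>0\<bar> * onorm ((*v) A)) 1)"
    by (rule bnd_mexp_Lmat[OF bnd_onorm])
  moreover have "theta (\<bar>0\<bar> * onorm ((*v) A)) 1 = 0" unfolding theta_def by simp
  ultimately show ?thesis using bnd_0_eq Lmat_1 by fastforce
qed

lemma mexp_matpow: "mexp ((real j * \<tau>) *\<^sub>R A) = matpow (mexp (\<tau> *\<^sub>R (A::real^'n^'n))) j"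
proof (induct j)
  case 0 then show ?case using mexp_zero[of A] by simp
next
  case (Suc j)
  have "mexp ((real (Suc j) * \<tau>) *\<^sub>R A) = mexp ((\<tau> + real j * \<tau>) *\<^sub>R A)" by (simp add: algebra_simps)
  also have "\<dots> = mexp (\<tau> *\<^sub>R A) ** mexp ((real j * \<tau>) *\<^sub>R A)" by (rule mexp_add)
  finally show ?case using Suc by simp
qed

lemma bnd_mexp_1: assumes "bnd A a" shows "bnd (mexp (h *\<^sub>R A) - mat 1) (\<bar>h\<bar> * a * exp (\<bar>h\<bar> * a))"
proof -
  have a: "a \<ge> 0" by (rule bnd_nonneg[OF assms])
  have "bnd (mexp (h *\<^sub>R A) - Lmat A h 1) (theta (\<bar>h\<bar> * a) 1)" by (rule bnd_mexp_Lmat[OF assms])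
  then have b: "bnd (mexp (h *\<^sub>R A) - mat 1) (theta (\<bar>h\<bar> * a) 1)" by (simp only: Lmat_1)
  have "theta (\<bar>h\<bar> * a) 1 \<le> \<bar>h\<bar> * a * exp (\<bar>h\<bar> * a)" using a by (intro theta_le1) simp
  then show ?thesis using b bnd_mono by blast
qed

lemma bnd_Tmat: assumes "bnd A a" "t \<ge> 0" shows "bnd (Tmat A t k) (t * exp (t * a))"
proof -
  have a: "a \<ge> 0" by (rule bnd_nonneg[OF assms(1)])
  have "bnd (Tmat A t k) (\<Sum>j<k. \<bar>t ^ (j + 1) / fact (j + 1)\<bar> * a ^ j)"
    unfolding Tmat_def by (intro bnd_sum bnd_scaleR bnd_matpow assms)
  moreover have "(\<Sum>j<k. \<bar>t ^ (j + 1) / fact (j + 1)\<bar> * a ^ j) \<le> (\<Sum>j<k. t * ((t * a) ^ j / fact j))"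
  proof (rule sum_mono)
    fix j
    have "fact j \<le> (fact (j + 1) :: real)" by (rule fact_mono) simp
    then have "t ^ j * a ^ j / fact (j + 1) \<le> t ^ j * a ^ j / fact j" using a assms(2)
      by (intro divide_left_mono) auto
    then have "t * (t ^ j * a ^ j / fact (j + 1)) \<le> t * (t ^ j * a ^ j / fact j)" using assms(2) by (rule mult_left_mono)
    then show "\<bar>t ^ (j + 1) / fact (j + 1)\<bar> * a ^ j \<le> t * ((t * a) ^ j / fact j)"
      using assms(2) by (simp add: power_mult_distrib algebra_simps)
  qed
  moreover have "(\<Sum>j<k. t * ((t * a) ^ j / fact j)) \<le> t * exp (t * a)"
  proof -
    have "(\<Sum>j<k. (t * a) ^ j / fact j) \<le> exp (t * a)"
      using sum_le_suminf[OF sums_summable[OF exp_real_sums], of "{..<k}" "t * a"] a assms(2)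
        sums_unique[OF exp_real_sums, of "t * a"] by simp
    then have "t * (\<Sum>j<k. (t * a) ^ j / fact j) \<le> t * exp (t * a)" using assms(2) by (rule mult_left_mono)
    then show ?thesis by (simp only: sum_distrib_left)
  qed
  ultimately show ?thesis by (meson bnd_mono order_trans)
qed

lemma bnd_Tmat_diff: assumes "bnd A a" "t \<ge> 0" "k \<ge> 1"
  shows "bnd (Tmat A t k - t *\<^sub>R mat 1) (t ^ 2 * a * exp (t * a))"
proof -
  have a: "a \<ge> 0" by (rule bnd_nonneg[OF assms(1)])
  obtain m where k: "k = Suc m" using assms(3) by (cases k) auto
  have "Tmat A t k = t *\<^sub>R mat 1 + (\<Sum>j<m. (t ^ (Suc j + 1) / fact (Suc j + 1)) *\<^sub>R matpow A (Suc j))"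
    unfolding Tmat_def k by (subst sum.lessThan_Suc_shift) simp
  then have e: "Tmat A t k - t *\<^sub>R mat 1 = (\<Sum>j<m. (t ^ (Suc j + 1) / fact (Suc j + 1)) *\<^sub>R matpow A (Suc j))"
    by simp
  have "bnd (Tmat A t k - t *\<^sub>R mat 1) (\<Sum>j<m. \<bar>t ^ (Suc j + 1) / fact (Suc j + 1)\<bar> * a ^ (Suc j))"
    unfolding e by (intro bnd_sum bnd_scaleR bnd_matpow assms)
  moreover have "(\<Sum>j<m. \<bar>t ^ (Suc j + 1) / fact (Suc j + 1)\<bar> * a ^ (Suc j)) \<le> (\<Sum>j<m. t ^ 2 * a * ((t * a) ^ j / fact j))"
  proof (rule sum_mono)
    fix j
    have "fact j \<le> (fact (Suc j + 1) :: real)" by (rule fact_mono) simp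
    then have "t ^ j * a ^ j / fact (Suc j + 1) \<le> t ^ j * a ^ j / fact j" using a assms(2)
      by (intro divide_left_mono) auto
    then have "(t ^ 2 * a) * (t ^ j * a ^ j / fact (Suc j + 1)) \<le> (t ^ 2 * a) * (t ^ j * a ^ j / fact j)"
      using assms(2) a by (intro mult_left_mono) auto
    then show "\<bar>t ^ (Suc j + 1) / fact (Suc j + 1)\<bar> * a ^ (Suc j) \<le> t ^ 2 * a * ((t * a) ^ j / fact j)"
      using assms(2) by (simp add: power_mult_distrib power2_eq_square algebra_simps)
  qed
  moreover have "(\<Sum>j<m. t ^ 2 * a * ((t * a) ^ j / fact j)) \<le> t ^ 2 * a * exp (t * a)"
  proof -
    have "(\<Sum>j<m. (t * a) ^ j / fact j) \<le> exp (t * a)"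
      using sum_le_suminf[OF sums_summable[OF exp_real_sums], of "{..<m}" "t * a"] a assms(2)
        sums_unique[OF exp_real_sums, of "t * a"] by simp
    then have "t ^ 2 * a * (\<Sum>j<m. (t * a) ^ j / fact j) \<le> t ^ 2 * a * exp (t * a)" using assms(2) a by (intro mult_left_mono) auto
    then show ?thesis by (simp only: sum_distrib_left)
  qed
  ultimately show ?thesis by (meson bnd_mono order_trans)
qed


(* ---- part C ---- *)

lemma lam_le1:
  fixes nn :: "real^'n \<Rightarrow> real" and np :: "real^'p \<Rightarrow> real"
  assumes nn: "is_norm nn" and np: "is_norm np" and t: "t \<ge> 0"
  shows "lam nn np A t r k \<le> 1"
proof -
  define a where "a = t * opnorm nn nn A"
  have a0: "a \<ge> 0" unfolding a_def using t opnorm_props(1)[OF nn nn] by simp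
  define e where "e = exp a * theta a k"
  have e0: "e \<ge> 0" unfolding e_def using theta_nonneg[OF a0] by simp
  have p: "opnorm np nn (pinv (snd r)) \<ge> 0" by (rule opnorm_props(1)[OF np nn])
  have g: "opnorm nn np (snd r) \<ge> 0" by (rule opnorm_props(1)[OF nn np])
  have c: "nn (fst r) \<ge> 0" by (rule is_normD(1)[OF nn])
  have "lam nn np A t r k = (1 - e * opnorm np nn (pinv (snd r)) * nn (fst r)) /
      (1 + e * opnorm np nn (pinv (snd r)) * opnorm nn np (snd r))"
    unfolding lam_def Let_def a_def e_def by simp
  also have "\<dots> \<le> 1"
  proof -
    have "0 \<le> e * opnorm np nn (pinv (snd r)) * nn (fst r)" using e0 p c by simp
    moreover have "0 \<le> e * opnorm np nn (pinv (snd r)) * opnorm nn np (snd r)" using e0 p g by simp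
    ultimately show ?thesis by (subst divide_le_eq_1) auto
  qed
  finally show ?thesis .
qed

lemma lam_tendsto:
  fixes nn :: "real^'n \<Rightarrow> real" and np :: "real^'p \<Rightarrow> real"
  shows "(\<lambda>k. lam nn np A t r k) \<longlonglongrightarrow> 1"
proof -
  define a where "a = t * opnorm nn nn A"
  have e: "(\<lambda>k. exp a * theta a k) \<longlonglongrightarrow> exp a * 0" by (intro tendsto_mult tendsto_const theta_tendsto)
  have "(\<lambda>k. (1 - exp a * theta a k * opnorm np nn (pinv (snd r)) * nn (fst r)) /
      (1 + exp a * theta a k * opnorm np nn (pinv (snd r)) * opnorm nn np (snd r)))
      \<longlonglongrightarrow> (1 - exp a * 0 * opnorm np nn (pinv (snd r)) * nn (fst r)) /
      (1 + exp a * 0 * opnorm np nn (pinv (snd r)) * opnorm nn np (snd r))"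
    by (intro tendsto_intros e) simp
  then show ?thesis unfolding lam_def Let_def a_def by simp
qed

lemma kappa_spec:
  fixes nn :: "real^'n \<Rightarrow> real" and np :: "real^'p \<Rightarrow> real"
  assumes "\<epsilon> < 1"
  shows "kappa nn np A t r \<epsilon> \<ge> 2 \<and> lam nn np A t r (kappa nn np A t r \<epsilon>) > \<epsilon>"
proof -
  have "eventually (\<lambda>k. lam nn np A t r k > \<epsilon>) sequentially"
    using order_tendstoD(1)[OF lam_tendsto assms] .
  moreover have "eventually (\<lambda>k. k \<ge> max (kmin A t) 2) sequentially" by (rule eventually_ge_at_top)
  ultimately have "eventually (\<lambda>k. k \<ge> max (kmin A t) 2 \<and> lam nn np A t r k > \<epsilon>) sequentially"
    by (rule eventually_conj[THEN eventually_mono]) auto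
  then obtain k where "k \<ge> max (kmin A t) 2 \<and> lam nn np A t r k > \<epsilon>"
    unfolding eventually_sequentially by blast
  then have "max (kmin A t) 2 \<le> kappa nn np A t r \<epsilon> \<and> lam nn np A t r (kappa nn np A t r \<epsilon>) > \<epsilon>"
    unfolding kappa_def by (rule LeastI)
  then show ?thesis by simp
qed

lemma pow2_le_fact: "(2::real) ^ (j + 1) \<le> fact (j + 2)"
proof (induct j)
  case 0 then show ?case by simp
next
  case (Suc j)
  have "(2::real) ^ (Suc j + 1) = 2 * 2 ^ (j + 1)" by simp
  also have "\<dots> \<le> 2 * fact (j + 2)" by (rule mult_left_mono[OF Suc]) simp
  also have "\<dots> \<le> real (j + 3) * fact (j + 2)" by (intro mult_right_mono) auto
  also have "\<dots> = fact (Suc j + 2)"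
  proof -
    have "Suc j + 2 = Suc (j + 2)" by simp
    then have "(fact (Suc j + 2) :: real) = of_nat (Suc (j + 2)) * fact (j + 2)" by (simp only: fact_Suc)
    then show ?thesis by simp
  qed
  finally show ?case .
qed

lemma half_sum: "(\<Sum>j<m. (1/2::real) ^ (j + 1)) = 1 - (1/2) ^ m"
  by (induct m) (simp_all add: algebra_simps)

lemma nn_matpow:
  fixes nn :: "real^'n \<Rightarrow> real"
  assumes nn: "is_norm nn"
  shows "nn (matpow A j *v x) \<le> opnorm nn nn A ^ j * nn x"
proof (induct j arbitrary: x)
  case 0 then show ?case by simp
next
  case (Suc j)
  have "nn (matpow A (Suc j) *v x) = nn (A *v (matpow A j *v x))" by (simp add: matrix_vector_mul_assoc)
  also have "\<dots> \<le> opnorm nn nn A * nn (matpow A j *v x)" by (rule opnorm_props(2)[OF nn nn])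
  also have "\<dots> \<le> opnorm nn nn A * (opnorm nn nn A ^ j * nn x)"
    by (intro mult_left_mono Suc opnorm_props(1)[OF nn nn])
  finally show ?case by simp
qed

lemma Tmat_invertible:
  fixes nn :: "real^'n \<Rightarrow> real" and A :: "real^'n^'n"
  assumes nn: "is_norm nn" and t: "t > 0" and ta: "t * opnorm nn nn A \<le> 1" and k: "k \<ge> 1"
  shows "invertible (Tmat A t k)"
proof -
  define \<alpha> where "\<alpha> = opnorm nn nn A"
  have \<alpha>0: "\<alpha> \<ge> 0" unfolding \<alpha>_def by (rule opnorm_props(1)[OF nn nn])
  obtain m where km: "k = Suc m" using k by (cases k) auto
  have ex: "Tmat A t k *v x = t *\<^sub>R x + (\<Sum>j<m. (t ^ (Suc j + 1) / fact (Suc j + 1)) *\<^sub>R (matpow A (Suc j) *v x))" for x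
    unfolding Tmat_def km by (subst sum.lessThan_Suc_shift) (simp add: sum_mv matrix_vector_mult_add_rdistrib scaleR_matrix_vector_assoc[symmetric])
  have "x = 0" if "Tmat A t k *v x = 0" for x
  proof (rule ccontr)
    assume x0: "x \<noteq> 0"
    then have nx: "nn x > 0" using is_normD(1,2)[OF nn, of x] by auto
    have trm: "nn ((t ^ (Suc j + 1) / fact (Suc j + 1)) *\<^sub>R (matpow A (Suc j) *v x)) \<le> t * ((1/2) ^ (j + 1) * nn x)" for j
    proof -
      have "nn ((t ^ (Suc j + 1) / fact (Suc j + 1)) *\<^sub>R (matpow A (Suc j) *v x))
          = t ^ (Suc j + 1) / fact (Suc j + 1) * nn (matpow A (Suc j) *v x)"
        using t by (simp add: is_normD(3)[OF nn])
      also have "\<dots> \<le> t ^ (Suc j + 1) / fact (Suc j + 1) * (\<alpha> ^ Suc j * nn x)"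
        using t unfolding \<alpha>_def by (intro mult_left_mono nn_matpow[OF nn]) auto
      also have "\<dots> = t * ((t * \<alpha>) ^ Suc j / fact (j + 2) * nn x)" by (simp add: power_mult_distrib algebra_simps)
      also have "\<dots> \<le> t * (1 / fact (j + 2) * nn x)"
      proof -
        have "(t * \<alpha>) ^ Suc j \<le> 1" using ta t \<alpha>0 unfolding \<alpha>_def by (intro power_le_one) auto
        then show ?thesis using t nx by (intro mult_left_mono mult_right_mono divide_right_mono) auto
      qed
      also have "\<dots> \<le> t * ((1/2) ^ (j + 1) * nn x)"
      proof -
        have "1 / fact (j + 2) \<le> (1 / 2 :: real) ^ (j + 1)"
          using pow2_le_fact[of j] by (simp add: power_one_over divide_simps)
        then show ?thesis using t nx by (intro mult_left_mono mult_right_mono) auto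
      qed
      finally show ?thesis .
    qed
    have "t * nn x = nn (t *\<^sub>R x)" using t by (simp add: is_normD(3)[OF nn])
    also have "\<dots> = nn (Tmat A t k *v x - (\<Sum>j<m. (t ^ (Suc j + 1) / fact (Suc j + 1)) *\<^sub>R (matpow A (Suc j) *v x)))"
      by (simp add: ex)
    also have "\<dots> = nn (\<Sum>j<m. (t ^ (Suc j + 1) / fact (Suc j + 1)) *\<^sub>R (matpow A (Suc j) *v x))"
      using that is_norm_minus[OF nn] by simp
    also have "\<dots> \<le> (\<Sum>j<m. nn ((t ^ (Suc j + 1) / fact (Suc j + 1)) *\<^sub>R (matpow A (Suc j) *v x)))"
      by (rule is_norm_sum[OF nn])
    also have "\<dots> \<le> (\<Sum>j<m. t * ((1/2) ^ (j + 1) * nn x))" by (rule sum_mono) (rule trm)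
    also have "\<dots> = t * nn x * (\<Sum>j<m. (1/2) ^ (j + 1))"
      by (simp add: sum_distrib_left mult_ac)
    also have "\<dots> = t * nn x * (1 - (1/2) ^ m)" by (simp only: half_sum)
    finally have "t * nn x * 1 \<le> t * nn x * (1 - (1/2) ^ m)" by simp
    then have "1 \<le> 1 - (1/2::real) ^ m" using t nx by (subst (asm) mult_le_cancel_left_pos) auto
    moreover have "(1/2::real) ^ m > 0" by simp
    ultimately show False by linarith
  qed
  then show ?thesis unfolding invertible_left_inverse matrix_left_invertible_ker by blast
qed

lemma not_invertible_0: "\<not> invertible (0::real^'n^'n)"
proof
  assume "invertible (0::real^'n^'n)"
  then obtain B :: "real^'n^'n" where "B ** 0 = mat 1" unfolding invertible_left_inverse by blast
  then have "(mat 1 :: real^'n^'n) $ undefined $ undefined = 0" by (metis times0_right zero_index)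
  then show False by (simp add: mat_def)
qed

lemma eta_spec:
  fixes nn :: "real^'n \<Rightarrow> real" and np :: "real^'p \<Rightarrow> real" and A :: "real^'n^'n"
  assumes nn: "is_norm nn" and t: "t > 0" and ta: "t * opnorm nn nn A \<le> 1" and e: "\<epsilon> < 1"
  shows "eta nn np A t r \<epsilon> \<ge> 1 \<and> lam nn np A t r (eta nn np A t r \<epsilon>) > \<epsilon>"
proof -
  have "eventually (\<lambda>k. lam nn np A t r k > \<epsilon>) sequentially"
    using order_tendstoD(1)[OF lam_tendsto e] .
  moreover have "eventually (\<lambda>k. k \<ge> 1) sequentially" by (rule eventually_ge_at_top)
  ultimately have "eventually (\<lambda>k. k \<ge> 1 \<and> lam nn np A t r k > \<epsilon>) sequentially"
    by (rule eventually_conj[THEN eventually_mono]) auto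
  then obtain k where k: "k \<ge> 1" "lam nn np A t r k > \<epsilon>"
    unfolding eventually_sequentially by blast
  then have "lam nn np A t r k > \<epsilon> \<and> invertible (Tmat A t k)" using Tmat_invertible[OF nn t ta] by blast
  then have l: "lam nn np A t r (eta nn np A t r \<epsilon>) > \<epsilon> \<and> invertible (Tmat A t (eta nn np A t r \<epsilon>))"
    unfolding eta_def by (rule LeastI)
  have "eta nn np A t r \<epsilon> \<noteq> 0"
  proof
    assume "eta nn np A t r \<epsilon> = 0"
    then have "Tmat A t (eta nn np A t r \<epsilon>) = 0" unfolding Tmat_def by simp
    then show False using l not_invertible_0 by metis
  qed
  then show ?thesis using l by simp
qed

lemma matrix_diff_rdistrib: "(A - B) ** C = A ** C - B ** (C::real^'k^'n)" for A B :: "real^'n^'m"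
  by (simp add: matrix_matrix_mult_def vec_eq_iff sum_subtractf left_diff_distrib)

lemma matrix_diff_ldistrib: "A ** (B - C) = A ** B - A ** (C::real^'k^'n)" for A :: "real^'n^'m"
  by (simp add: matrix_matrix_mult_def vec_eq_iff sum_subtractf right_diff_distrib)

lemma theta_le2: assumes r: "r \<ge> 0" and k: "k \<ge> 2" shows "theta r k \<le> r ^ 2 * exp r"
proof -
  have "r ^ (j + k) / fact (j + k) \<le> r ^ 2 * (r ^ (j + (k - 2)) / fact (j + (k - 2)))" for j
  proof -
    have "fact (j + (k - 2)) \<le> (fact (j + k) :: real)" by (rule fact_mono) simp
    then have "r ^ (j + (k - 2)) / fact (j + k) \<le> r ^ (j + (k - 2)) / fact (j + (k - 2))" using r
      by (intro divide_left_mono) auto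
    then have "r ^ 2 * (r ^ (j + (k - 2)) / fact (j + k)) \<le> r ^ 2 * (r ^ (j + (k - 2)) / fact (j + (k - 2)))"
      by (rule mult_left_mono) simp
    moreover have "r ^ (j + k) = r ^ 2 * r ^ (j + (k - 2))"
    proof -
      have "j + k = 2 + (j + (k - 2))" using k by simp
      then show ?thesis by (metis power_add)
    qed
    ultimately show ?thesis by simp
  qed
  then have "theta r k \<le> r ^ 2 * theta r (k - 2)"
    using sums_le[OF _ theta_sums sums_mult[OF theta_sums]] by blast
  moreover have "theta r (k - 2) \<le> exp r"
  proof -
    have "theta r (k - 2) = exp r - (\<Sum>j<k - 2. r ^ j / fact j)"
      using suminf_minus_initial_segment[OF sums_summable[OF exp_real_sums], of r "k - 2"]
        sums_unique[OF exp_real_sums] unfolding theta_def by simp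
    moreover have "(\<Sum>j<k - 2. r ^ j / fact j) \<ge> 0" using r by (intro sum_nonneg) auto
    ultimately show ?thesis by simp
  qed
  ultimately show ?thesis by (meson mult_left_mono order_trans zero_le_power2)
qed

lemma Hrep_eq: "Hrep nn np A t \<epsilon> r =
   (Lmat A t (kappa nn np A t r \<epsilon>) *v fst r,
    lam nn np A t r (kappa nn np A t r \<epsilon>) *\<^sub>R (Lmat A t (kappa nn np A t r \<epsilon>) ** snd r))"
  unfolding Hrep_def Let_def by simp

lemma H_iter:
  fixes nn :: "real^'n \<Rightarrow> real" and np :: "real^'p \<Rightarrow> real" and A :: "real^'n^'n"
  assumes nn: "is_norm nn" and np: "is_norm np" and t: "t \<ge> 0" and e0: "0 \<le> \<epsilon>" and e1: "\<epsilon> < 1"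
    and bA: "bnd A a"
  shows "\<exists>M \<mu>. (Hrep nn np A t \<epsilon> ^^ i) r = (M *v fst r, \<mu> *\<^sub>R (M ** snd r)) \<and>
    bnd M (exp (real i * (t * a))) \<and>
    bnd (M - matpow (mexp (t *\<^sub>R A)) i) (real i * (t * a) ^ 2 * exp (real i * (t * a))) \<and>
    0 \<le> \<mu> \<and> \<mu> \<le> 1 \<and> 1 - \<mu> \<le> real i * (1 - \<epsilon>)"
proof (induct i)
  case 0
  show ?case
    by (rule exI[of _ "mat 1"], rule exI[of _ 1]) (simp add: bnd_id bnd_zero)
next
  case (Suc i)
  then obtain M \<mu> where IH: "(Hrep nn np A t \<epsilon> ^^ i) r = (M *v fst r, \<mu> *\<^sub>R (M ** snd r))"
    "bnd M (exp (real i * (t * a)))"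
    "bnd (M - matpow (mexp (t *\<^sub>R A)) i) (real i * (t * a) ^ 2 * exp (real i * (t * a)))"
    "0 \<le> \<mu>" "\<mu> \<le> 1" "1 - \<mu> \<le> real i * (1 - \<epsilon>)" by blast
  have a0: "a \<ge> 0" by (rule bnd_nonneg[OF bA])
  define r' where "r' = (Hrep nn np A t \<epsilon> ^^ i) r"
  define k where "k = kappa nn np A t r' \<epsilon>"
  define L where "L = Lmat A t k"
  define lm where "lm = lam nn np A t r' k"
  have k2: "k \<ge> 2" and l\<epsilon>: "lm > \<epsilon>" using kappa_spec[OF e1] unfolding k_def lm_def by blast+
  have l1: "lm \<le> 1" unfolding lm_def by (rule lam_le1[OF nn np t])
  define E where "E = mexp (t *\<^sub>R A)"
  have bL: "bnd L (exp (t * a))" unfolding L_def using bnd_Lmat[OF bA, of t k] t by simp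
  have bE: "bnd E (exp (t * a))" unfolding E_def using bnd_mexp[OF bA, of t] t by simp
  have bLE: "bnd (L - E) ((t * a) ^ 2 * exp (t * a))"
  proof -
    have "bnd (L - E) (theta (\<bar>t\<bar> * a) k)" unfolding L_def E_def
      using bnd_mexp_Lmat[OF bA, of t k] bnd_scaleR[of _ _ "-1"] by (metis minus_diff_eq bnd_def norm_minus_cancel
        matrix_vector_mult_diff_rdistrib)
    moreover have "theta (\<bar>t\<bar> * a) k \<le> (t * a) ^ 2 * exp (t * a)" using theta_le2[OF _ k2, of "t * a"] t a0 by simp
    ultimately show ?thesis by (rule bnd_mono)
  qed
  have h1: "(Hrep nn np A t \<epsilon> ^^ Suc i) r = Hrep nn np A t \<epsilon> r'" unfolding r'_def by simp
  have h2: "Hrep nn np A t \<epsilon> r' = (L *v fst r', lm *\<^sub>R (L ** snd r'))"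
    unfolding Hrep_eq k_def[symmetric] L_def[symmetric] lm_def[symmetric] ..
  have step: "(Hrep nn np A t \<epsilon> ^^ Suc i) r = ((L ** M) *v fst r, (lm * \<mu>) *\<^sub>R ((L ** M) ** snd r))"
    unfolding h1 h2 using IH(1) unfolding r'_def[symmetric]
    by (simp add: matrix_vector_mul_assoc matrix_scalar_ac matrix_mul_assoc scalar_matrix_assoc[symmetric])
  show ?case
  proof (intro exI conjI)
    show "(Hrep nn np A t \<epsilon> ^^ Suc i) r = ((L ** M) *v fst r, (lm * \<mu>) *\<^sub>R ((L ** M) ** snd r))" by (rule step)
    have "bnd (L ** M) (exp (t * a) * exp (real i * (t * a)))" by (rule bnd_mult[OF bL IH(2)])
    then show "bnd (L ** M) (exp (real (Suc i) * (t * a)))" by (simp add: exp_add[symmetric] algebra_simps)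
    have eq: "L ** M - matpow E (Suc i) = (L - E) ** M + E ** (M - matpow E i)"
      by (simp add: matrix_diff_rdistrib matrix_diff_ldistrib)
    have "bnd ((L - E) ** M + E ** (M - matpow E i))
        ((t * a) ^ 2 * exp (t * a) * exp (real i * (t * a)) + exp (t * a) * (real i * (t * a) ^ 2 * exp (real i * (t * a))))"
      by (intro bnd_add bnd_mult bLE IH(2) bE IH(3)[folded E_def])
    moreover have "(t * a) ^ 2 * exp (t * a) * exp (real i * (t * a)) + exp (t * a) * (real i * (t * a) ^ 2 * exp (real i * (t * a)))
        = real (Suc i) * (t * a) ^ 2 * exp (real (Suc i) * (t * a))"
    proof -
      have "exp (real (Suc i) * (t * a)) = exp (t * a) * exp (real i * (t * a))"
        by (simp add: exp_add[symmetric] algebra_simps)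
      then show ?thesis by (simp add: algebra_simps)
    qed
    ultimately show "bnd (L ** M - matpow (mexp (t *\<^sub>R A)) (Suc i)) (real (Suc i) * (t * a) ^ 2 * exp (real (Suc i) * (t * a)))"
      unfolding E_def[symmetric] eq by simp
    show "0 \<le> lm * \<mu>" using l\<epsilon> e0 IH(4) by simp
    show "lm * \<mu> \<le> 1" using l1 IH(4,5) l\<epsilon> e0 by (simp add: mult_le_one)
    have "1 - lm * \<mu> = (1 - lm) + lm * (1 - \<mu>)" by (simp add: algebra_simps)
    also have "\<dots> \<le> (1 - \<epsilon>) + 1 * (1 - \<mu>)" using l\<epsilon> l1 IH(5) by (intro add_mono mult_right_mono) auto
    also have "\<dots> \<le> real (Suc i) * (1 - \<epsilon>)" using IH(6) by (simp add: algebra_simps)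
    finally show "1 - lm * \<mu> \<le> real (Suc i) * (1 - \<epsilon>)" .
  qed
qed


(* ---- part D ---- *)

lemma nball_bound: fixes np :: "real^'p \<Rightarrow> real" assumes "is_norm np"
  shows "\<exists>\<rho>\<ge>0. \<forall>b\<in>nball np. norm b \<le> \<rho>"
proof -
  obtain c where c: "c > 0" "\<And>x. norm x \<le> c * np x" using norm_lower[OF assms] by blast
  have "norm b \<le> c" if "b \<in> nball np" for b
    using c(2)[of b] that c(1) unfolding nball_def by (smt (verit) mem_Collect_eq mult_left_le)
  then show ?thesis using c(1) by (intro exI[of _ c]) auto
qed

lemma zclose:
  fixes M P :: "real^'n^'n" and G :: "real^'p^'n" and np :: "real^'p \<Rightarrow> real"
  assumes bMP: "bnd (M - P) \<beta>" and bM: "bnd M \<beta>M" and bG: "bnd G g"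
    and rho: "\<And>b. b \<in> nball np \<Longrightarrow> norm b \<le> \<rho>" and mu: "0 \<le> \<mu>" "\<mu> \<le> 1"
  shows "close (\<beta> * (norm c + g * \<rho>) + (1 - \<mu>) * (\<beta>M * (g * \<rho>)))
     (zset np (M *v c, \<mu> *\<^sub>R (M ** G))) ((\<lambda>u. P *v u) ` zset np (c, G))"
proof -
  have \<beta>0: "\<beta> \<ge> 0" by (rule bnd_nonneg[OF bMP])
  have \<beta>M0: "\<beta>M \<ge> 0" by (rule bnd_nonneg[OF bM])
  have g0: "g \<ge> 0" by (rule bnd_nonneg[OF bG])
  have key: "norm ((M *v c + (\<mu> *\<^sub>R (M ** G)) *v b) - P *v (c + G *v b))
      \<le> \<beta> * (norm c + g * \<rho>) + (1 - \<mu>) * (\<beta>M * (g * \<rho>))" if b: "b \<in> nball np" for b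
  proof -
    have nb: "norm (G *v b) \<le> g * \<rho>" using bndD[OF bG, of b] rho[OF b] g0 by (meson mult_left_mono order_trans)
    have eq: "(M *v c + (\<mu> *\<^sub>R (M ** G)) *v b) - P *v (c + G *v b)
        = (M - P) *v (c + G *v b) + (\<mu> - 1) *\<^sub>R (M *v (G *v b))"
    proof -
      have "(\<mu> *\<^sub>R (M ** G)) *v b = \<mu> *\<^sub>R (M *v (G *v b))"
        by (simp add: matrix_vector_mul_assoc scaleR_matrix_vector_assoc[symmetric])
      moreover have "(M - P) *v (c + G *v b) = M *v c + M *v (G *v b) - P *v c - P *v (G *v b)"
        by (simp add: matrix_vector_mult_diff_rdistrib matrix_vector_right_distrib)
      ultimately show ?thesis by (simp add: algebra_simps matrix_vector_right_distrib)
    qed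
    have "norm ((M - P) *v (c + G *v b)) \<le> \<beta> * norm (c + G *v b)" by (rule bndD[OF bMP])
    also have "\<dots> \<le> \<beta> * (norm c + g * \<rho>)" using nb \<beta>0 norm_triangle_ineq[of c "G *v b"]
      by (intro mult_left_mono) auto
    finally have 1: "norm ((M - P) *v (c + G *v b)) \<le> \<beta> * (norm c + g * \<rho>)" .
    have "norm ((\<mu> - 1) *\<^sub>R (M *v (G *v b))) = (1 - \<mu>) * norm (M *v (G *v b))" using mu by simp
    also have "\<dots> \<le> (1 - \<mu>) * (\<beta>M * norm (G *v b))" using mu by (intro mult_left_mono bndD[OF bM]) auto
    also have "\<dots> \<le> (1 - \<mu>) * (\<beta>M * (g * \<rho>))" using mu \<beta>M0 nb by (intro mult_left_mono) auto
    finally have 2: "norm ((\<mu> - 1) *\<^sub>R (M *v (G *v b))) \<le> (1 - \<mu>) * (\<beta>M * (g * \<rho>))" .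
    have "norm ((M - P) *v (c + G *v b) + (\<mu> - 1) *\<^sub>R (M *v (G *v b)))
        \<le> norm ((M - P) *v (c + G *v b)) + norm ((\<mu> - 1) *\<^sub>R (M *v (G *v b)))" by (rule norm_triangle_ineq)
    also have "\<dots> \<le> \<beta> * (norm c + g * \<rho>) + (1 - \<mu>) * (\<beta>M * (g * \<rho>))" using 1 2 by (rule add_mono)
    finally show ?thesis unfolding eq .
  qed
  show ?thesis unfolding close_def zset_def
  proof (intro conjI ballI)
    fix x assume "x \<in> {fst (M *v c, \<mu> *\<^sub>R (M ** G)) + snd (M *v c, \<mu> *\<^sub>R (M ** G)) *v b |b. b \<in> nball np}"
    then obtain b where x: "x = M *v c + (\<mu> *\<^sub>R (M ** G)) *v b" "b \<in> nball np" by auto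
    then show "\<exists>y\<in>(*v) P ` {fst (c, G) + snd (c, G) *v b |b. b \<in> nball np}. norm (x - y) \<le> \<beta> * (norm c + g * \<rho>) + (1 - \<mu>) * (\<beta>M * (g * \<rho>))"
      using key[OF x(2)] by (intro bexI[of _ "P *v (c + G *v b)"]) auto
  next
    fix y assume "y \<in> (*v) P ` {fst (c, G) + snd (c, G) *v b |b. b \<in> nball np}"
    then obtain b where y: "y = P *v (c + G *v b)" "b \<in> nball np" by auto
    then show "\<exists>x\<in>{fst (M *v c, \<mu> *\<^sub>R (M ** G)) + snd (M *v c, \<mu> *\<^sub>R (M ** G)) *v b |b. b \<in> nball np}. norm (x - y) \<le> \<beta> * (norm c + g * \<rho>) + (1 - \<mu>) * (\<beta>M * (g * \<rho>))"
      using key[OF y(2)] by (intro bexI[of _ "M *v c + (\<mu> *\<^sub>R (M ** G)) *v b"]) auto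
  qed
qed

lemma S_close:
  fixes nn :: "real^'n \<Rightarrow> real" and np :: "real^'p \<Rightarrow> real" and A :: "real^'n^'n"
  assumes nn: "is_norm nn" and np: "is_norm np" and t: "t \<ge> 0" and e0: "0 \<le> \<epsilon>" and e1: "\<epsilon> < 1"
    and bA: "bnd A a" and bG: "bnd (snd X) g" and rho: "\<And>b. b \<in> nball np \<Longrightarrow> norm b \<le> \<rho>"
  shows "close (real i * (t * a) ^ 2 * exp (real i * (t * a)) * (norm (fst X) + g * \<rho>)
       + real i * (1 - \<epsilon>) * (exp (real i * (t * a)) * (g * \<rho>)))
     (zset np ((Hrep nn np A t \<epsilon> ^^ i) X)) (Rh A (zset np X) (real i * t))"
proof -
  obtain M \<mu> where H: "(Hrep nn np A t \<epsilon> ^^ i) X = (M *v fst X, \<mu> *\<^sub>R (M ** snd X))"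
    "bnd M (exp (real i * (t * a)))"
    "bnd (M - matpow (mexp (t *\<^sub>R A)) i) (real i * (t * a) ^ 2 * exp (real i * (t * a)))"
    "0 \<le> \<mu>" "\<mu> \<le> 1" "1 - \<mu> \<le> real i * (1 - \<epsilon>)"
    using H_iter[OF nn np t e0 e1 bA] by blast
  have Rh: "Rh A (zset np X) (real i * t) = (\<lambda>u. matpow (mexp (t *\<^sub>R A)) i *v u) ` zset np (fst X, snd X)"
    unfolding Rh_def mexp_matpow by simp
  have g0: "g \<ge> 0" by (rule bnd_nonneg[OF bG])
  have r0: "\<rho> \<ge> 0" using rho[of 0] is_normD(2)[OF np, of 0] unfolding nball_def by auto
  have c: "close (real i * (t * a) ^ 2 * exp (real i * (t * a)) * (norm (fst X) + g * \<rho>)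
       + (1 - \<mu>) * (exp (real i * (t * a)) * (g * \<rho>)))
     (zset np ((Hrep nn np A t \<epsilon> ^^ i) X)) (Rh A (zset np X) (real i * t))"
    unfolding H(1) Rh by (rule zclose[OF H(3) H(2) bG rho H(4) H(5)])
  show ?thesis
    by (rule close_mono[OF c]) (intro add_mono order_refl mult_right_mono H(6), use g0 r0 in auto)
qed

lemma Irep_eq: "Irep nn np A t \<epsilon> r =
   (Tmat A t (eta nn np A t r \<epsilon>) *v fst r,
    lam nn np A t r (eta nn np A t r \<epsilon>) *\<^sub>R (Tmat A t (eta nn np A t r \<epsilon>) ** snd r))"
  unfolding Irep_def Let_def by simp

lemma V_close:
  fixes nn :: "real^'n \<Rightarrow> real" and nq :: "real^'q \<Rightarrow> real" and A :: "real^'n^'n"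
  assumes nn: "is_norm nn" and nq: "is_norm nq" and t: "t > 0" and ta: "t * opnorm nn nn A \<le> 1"
    and e0: "0 \<le> \<epsilon>" and e1: "\<epsilon> < 1" and f0: "0 \<le> \<phi>" and f1: "\<phi> < 1"
    and bA: "bnd A a" and bG: "bnd (snd U) g" and rho: "\<And>b. b \<in> nball nq \<Longrightarrow> norm b \<le> \<rho>"
  shows "close ((exp (real j * (t * a)) * (t ^ 2 * a * exp (t * a)) + t * (real j * (t * a) ^ 2 * exp (real j * (t * a))))
           * (norm (fst U) + g * \<rho>)
       + ((1 - \<phi>) + real j * (1 - \<epsilon>)) * ((exp (real j * (t * a)) * (t * exp (t * a))) * (g * \<rho>)))
     (zset nq ((Hrep nn nq A t \<epsilon> ^^ j) (Irep nn nq A t \<phi> U)))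
     ((\<lambda>u. t *\<^sub>R (matpow (mexp (t *\<^sub>R A)) j *v u)) ` zset nq U)"
proof -
  define k where "k = eta nn nq A t U \<phi>"
  define Tm where "Tm = Tmat A t k"
  define l0 where "l0 = lam nn nq A t U k"
  have k: "k \<ge> 1" "l0 > \<phi>" using eta_spec[OF nn t ta f1, of nq U] unfolding k_def l0_def by blast+
  have l1: "l0 \<le> 1" unfolding l0_def by (rule lam_le1[OF nn nq]) (use t in simp)
  have I: "Irep nn nq A t \<phi> U = (Tm *v fst U, l0 *\<^sub>R (Tm ** snd U))"
    unfolding Irep_eq k_def[symmetric] Tm_def l0_def ..
  obtain M \<mu> where H: "(Hrep nn nq A t \<epsilon> ^^ j) (Irep nn nq A t \<phi> U) = (M *v fst (Irep nn nq A t \<phi> U), \<mu> *\<^sub>R (M ** snd (Irep nn nq A t \<phi> U)))"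
    "bnd M (exp (real j * (t * a)))"
    "bnd (M - matpow (mexp (t *\<^sub>R A)) j) (real j * (t * a) ^ 2 * exp (real j * (t * a)))"
    "0 \<le> \<mu>" "\<mu> \<le> 1" "1 - \<mu> \<le> real j * (1 - \<epsilon>)"
    using H_iter[OF nn nq _ e0 e1 bA] t by (meson less_imp_le)
  have H1: "(Hrep nn nq A t \<epsilon> ^^ j) (Irep nn nq A t \<phi> U) = ((M ** Tm) *v fst U, (\<mu> * l0) *\<^sub>R ((M ** Tm) ** snd U))"
    unfolding H(1) unfolding I by (simp add: matrix_vector_mul_assoc matrix_scalar_ac matrix_mul_assoc scalar_matrix_assoc[symmetric])
  define E where "E = matpow (mexp (t *\<^sub>R A)) j"
  have eq: "M ** Tm - t *\<^sub>R E = M ** (Tm - t *\<^sub>R mat 1) + t *\<^sub>R (M - E)"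
    by (simp add: matrix_diff_ldistrib matrix_scalar_ac algebra_simps)
  have bT: "bnd (Tm - t *\<^sub>R mat 1) (t ^ 2 * a * exp (t * a))" unfolding Tm_def
    using bnd_Tmat_diff[OF bA _ k(1)] t by simp
  have b1: "bnd (M ** Tm - t *\<^sub>R E)
     (exp (real j * (t * a)) * (t ^ 2 * a * exp (t * a)) + t * (real j * (t * a) ^ 2 * exp (real j * (t * a))))"
    unfolding eq using bnd_add[OF bnd_mult[OF H(2) bT] bnd_scaleR[OF H(3)[folded E_def], of t]] t by simp
  have b2: "bnd (M ** Tm) (exp (real j * (t * a)) * (t * exp (t * a)))"
    unfolding Tm_def using bnd_mult[OF H(2) bnd_Tmat[OF bA, of t k]] t by simp
  have mu: "0 \<le> \<mu> * l0" "\<mu> * l0 \<le> 1" using H(4,5) k(2) l1 f0 by (auto simp: mult_le_one)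
  have img: "(\<lambda>u. t *\<^sub>R (E *v u)) ` zset nq U = (\<lambda>u. (t *\<^sub>R E) *v u) ` zset nq (fst U, snd U)"
    by (simp add: scaleR_matrix_vector_assoc)
  have c: "close ((exp (real j * (t * a)) * (t ^ 2 * a * exp (t * a)) + t * (real j * (t * a) ^ 2 * exp (real j * (t * a))))
           * (norm (fst U) + g * \<rho>) + (1 - \<mu> * l0) * ((exp (real j * (t * a)) * (t * exp (t * a))) * (g * \<rho>)))
     (zset nq ((Hrep nn nq A t \<epsilon> ^^ j) (Irep nn nq A t \<phi> U)))
     ((\<lambda>u. t *\<^sub>R (E *v u)) ` zset nq U)"
    unfolding H1 img by (rule zclose[OF b1 b2 bG rho mu])
  have g0: "g \<ge> 0" by (rule bnd_nonneg[OF bG])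
  have r0: "\<rho> \<ge> 0" using rho[of 0] is_normD(2)[OF nq, of 0] unfolding nball_def by auto
  have "1 - \<mu> * l0 = (1 - l0) + l0 * (1 - \<mu>)" by (simp add: algebra_simps)
  also have "\<dots> \<le> (1 - \<phi>) + 1 * (real j * (1 - \<epsilon>))"
    using k(2) l1 H(5,6) f0 by (intro add_mono mult_mono) auto
  finally have m: "1 - \<mu> * l0 \<le> (1 - \<phi>) + real j * (1 - \<epsilon>)" by simp
  have nn0: "0 \<le> (exp (real j * (t * a)) * (t * exp (t * a))) * (g * \<rho>)" using t g0 r0 by simp
  show ?thesis unfolding E_def[symmetric]
    by (rule close_mono[OF c]) (intro add_mono order_refl mult_right_mono m nn0)
qed


(* ---- part E ---- *)

lemma mexp_diff_bnd:
  assumes bA: "bnd A a"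
  shows "bnd (mexp (s *\<^sub>R A) - mexp (s0 *\<^sub>R A)) (exp (\<bar>s0\<bar> * a) * (\<bar>s - s0\<bar> * a * exp (\<bar>s - s0\<bar> * a)))"
proof -
  have "mexp (s *\<^sub>R A) = mexp (s0 *\<^sub>R A) ** mexp ((s - s0) *\<^sub>R A)"
    using mexp_add[of s0 "s - s0" A] by simp
  then have eq: "mexp (s *\<^sub>R A) - mexp (s0 *\<^sub>R A) = mexp (s0 *\<^sub>R A) ** (mexp ((s - s0) *\<^sub>R A) - mat 1)"
    by (simp add: matrix_diff_ldistrib)
  show ?thesis unfolding eq by (intro bnd_mult bnd_mexp bnd_mexp_1 bA)
qed

lemma mexp_cont: "continuous_on UNIV (\<lambda>s. mexp (s *\<^sub>R (A::real^'n^'n)))"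
proof -
  define a where "a = onorm ((*v) A)"
  have bA: "bnd A a" unfolding a_def by (rule bnd_onorm)
  have a0: "a \<ge> 0" by (rule bnd_nonneg[OF bA])
  define c where "c = real CARD('n) * real CARD('n)"
  have c0: "c \<ge> 0" unfolding c_def by simp
  show ?thesis
  proof (unfold continuous_on_iff, intro ballI allI impI)
    fix s0 :: real and e :: real assume "e > 0"
    define K where "K = c * (exp (\<bar>s0\<bar> * a) * (a * exp a))"
    have K0: "K \<ge> 0" unfolding K_def using c0 a0 by simp
    show "\<exists>d>0. \<forall>s\<in>UNIV. dist s s0 < d \<longrightarrow> dist (mexp (s *\<^sub>R A)) (mexp (s0 *\<^sub>R A)) < e"
    proof (intro exI[of _ "min 1 (e / (K + 1))"] conjI ballI impI)
      show "min 1 (e / (K + 1)) > 0" using \<open>e > 0\<close> K0 by simp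
      fix s assume "dist s s0 < min 1 (e / (K + 1))"
      then have d1: "\<bar>s - s0\<bar> \<le> 1" and d2: "\<bar>s - s0\<bar> < e / (K + 1)" by (auto simp: dist_real_def)
      have "norm (mexp (s *\<^sub>R A) - mexp (s0 *\<^sub>R A)) \<le> c * (exp (\<bar>s0\<bar> * a) * (\<bar>s - s0\<bar> * a * exp (\<bar>s - s0\<bar> * a)))"
        unfolding c_def by (rule bnd_norm[OF mexp_diff_bnd[OF bA]])
      also have "\<dots> \<le> c * (exp (\<bar>s0\<bar> * a) * (\<bar>s - s0\<bar> * a * exp a))"
      proof -
        have "\<bar>s - s0\<bar> * a \<le> a" using d1 a0 by (simp add: mult_left_le_one_le)
        then have "exp (\<bar>s - s0\<bar> * a) \<le> exp a" by simp
        then have "\<bar>s - s0\<bar> * a * exp (\<bar>s - s0\<bar> * a) \<le> \<bar>s - s0\<bar> * a * exp a" using a0 by (intro mult_left_mono) auto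
        then have "exp (\<bar>s0\<bar> * a) * (\<bar>s - s0\<bar> * a * exp (\<bar>s - s0\<bar> * a)) \<le> exp (\<bar>s0\<bar> * a) * (\<bar>s - s0\<bar> * a * exp a)"
          by (rule mult_left_mono) simp
        then show ?thesis using c0 by (rule mult_left_mono)
      qed
      also have "\<dots> = K * \<bar>s - s0\<bar>" unfolding K_def by (simp add: algebra_simps)
      also have "\<dots> \<le> K * (e / (K + 1))" using d2 K0 by (intro mult_left_mono) auto
      also have "\<dots> < e" using K0 \<open>e > 0\<close> by (simp add: field_simps)
      finally show "dist (mexp (s *\<^sub>R A)) (mexp (s0 *\<^sub>R A)) < e" by (simp add: dist_norm)
    qed
  qed
qed

lemma meas_restrict:
  assumes "f measurable_on S" "T \<subseteq> S" "T \<in> sets lebesgue"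
  shows "f measurable_on T"
proof -
  have "(\<lambda>x. if x \<in> S then f x else 0) measurable_on UNIV" using assms(1) measurable_on_UNIV by blast
  then have "(\<lambda>x. if x \<in> T then (if x \<in> S then f x else 0) else 0) measurable_on UNIV"
    using assms(3) by (rule measurable_on_restrict)
  moreover have "(\<lambda>x. if x \<in> T then (if x \<in> S then f x else 0) else 0) = (\<lambda>x. if x \<in> T then f x else 0)"
    using assms(2) by (intro ext) auto
  ultimately show ?thesis using measurable_on_UNIV by metis
qed

lemma bilinear_mv: "bilinear (\<lambda>(M::real^'k^'m) x. M *v x)"
  unfolding bilinear_def
  by (auto intro!: linearI simp: matrix_vector_mult_add_rdistrib matrix_vector_right_distrib
      scaleR_matrix_vector_assoc matrix_vector_mult_scaleR)

lemma Ew_meas: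
  fixes A :: "real^'n^'n"
  assumes "w measurable_on S" "S \<in> sets lebesgue"
  shows "(\<lambda>s. mexp (s *\<^sub>R A) *v w s) measurable_on S"
proof -
  have "(\<lambda>s. mexp (s *\<^sub>R A)) measurable_on UNIV" by (rule continuous_imp_measurable_on[OF mexp_cont])
  then have "(\<lambda>s. mexp (s *\<^sub>R A)) measurable_on S" using meas_restrict[OF _ subset_UNIV assms(2)] by blast
  then show ?thesis using measurable_on_bilinear[OF bilinear_mv _ assms(1)] by blast
qed

lemma bounded_meas_integrable:
  fixes f :: "real \<Rightarrow> real^'n"
  assumes "f measurable_on {a..b}" "\<And>s. s \<in> {a..b} \<Longrightarrow> norm (f s) \<le> B"
  shows "f integrable_on {a..b}"
proof (rule measurable_bounded_by_integrable_imp_integrable)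
  show "f \<in> borel_measurable (lebesgue_on {a..b})"
    using assms(1) measurable_on_iff_borel_measurable[of "{a..b}" f] by simp
  show "(\<lambda>x. B) integrable_on {a..b}" by (rule integrable_const_ivl)
qed (use assms in auto)

lemma Ew_integrable:
  fixes A :: "real^'n^'n"
  assumes bA: "bnd A a" and w: "w measurable_on {l..r}" and K: "\<And>s. s \<in> {l..r} \<Longrightarrow> norm (w s) \<le> K"
  shows "(\<lambda>s. mexp (s *\<^sub>R A) *v w s) integrable_on {l..r}" "w integrable_on {l..r}"
proof -
  have a0: "a \<ge> 0" by (rule bnd_nonneg[OF bA])
  show "w integrable_on {l..r}" using bounded_meas_integrable[OF w K] .
  have "norm (mexp (s *\<^sub>R A) *v w s) \<le> exp ((\<bar>l\<bar> + \<bar>r\<bar>) * a) * K" if s: "s \<in> {l..r}" for s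
  proof -
    have K0: "K \<ge> 0" using K[OF s] norm_ge_zero order_trans by blast
    have "norm (mexp (s *\<^sub>R A) *v w s) \<le> exp (\<bar>s\<bar> * a) * norm (w s)" by (rule bndD[OF bnd_mexp[OF bA]])
    also have "\<dots> \<le> exp ((\<bar>l\<bar> + \<bar>r\<bar>) * a) * K"
      using s a0 K[OF s] K0 by (intro mult_mono) (auto intro!: mult_right_mono)
    finally show ?thesis .
  qed
  then show "(\<lambda>s. mexp (s *\<^sub>R A) *v w s) integrable_on {l..r}"
    by (intro bounded_meas_integrable Ew_meas w) auto
qed

lemma convex_mean:
  fixes f :: "real \<Rightarrow> real^'n"
  assumes S: "convex S" "closed S" and f: "f integrable_on {l..r}" and lr: "l < r"
    and fS: "\<And>s. s \<in> {l..r} \<Longrightarrow> f s \<in> S"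
  shows "(1 / (r - l)) *\<^sub>R integral {l..r} f \<in> S"
proof (rule ccontr)
  assume z: "(1 / (r - l)) *\<^sub>R integral {l..r} f \<notin> S"
  obtain c d where cd: "inner c ((1 / (r - l)) *\<^sub>R integral {l..r} f) < d" "\<And>x. x \<in> S \<Longrightarrow> inner c x > d"
    using separating_hyperplane_closed_point[OF S z] by blast
  have bl: "bounded_linear (inner c)" by (rule bounded_linear_inner_right)
  have "inner c (integral {l..r} f) = integral {l..r} (\<lambda>s. inner c (f s))"
    using integral_linear[OF f bl] by (simp add: o_def)
  also have "\<dots> \<ge> integral {l..r} (\<lambda>s. d)"
    using cd(2)[OF fS] integrable_linear[OF f bl]
    by (intro integral_le) (auto simp: o_def less_imp_le)
  finally have "inner c (integral {l..r} f) \<ge> (r - l) * d" using lr by simp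
  then have "inner c ((1 / (r - l)) *\<^sub>R integral {l..r} f) \<ge> d" using lr
    by (simp add: field_simps)
  then show False using cd(1) by simp
qed

lemma Ediff_bound:
  fixes A :: "real^'n^'n"
  assumes bA: "bnd A a" and s: "s \<in> {t0..t0 + \<tau>}" and t0: "t0 \<ge> 0" and nx: "norm x \<le> K"
  shows "norm ((mexp (s *\<^sub>R A) - mexp (t0 *\<^sub>R A)) *v x) \<le> exp (t0 * a) * (\<tau> * a * exp (\<tau> * a)) * K"
proof -
  have a0: "a \<ge> 0" by (rule bnd_nonneg[OF bA])
  have "norm ((mexp (s *\<^sub>R A) - mexp (t0 *\<^sub>R A)) *v x) \<le> exp (\<bar>t0\<bar> * a) * (\<bar>s - t0\<bar> * a * exp (\<bar>s - t0\<bar> * a)) * norm x"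
    by (rule bndD[OF mexp_diff_bnd[OF bA]])
  also have "\<dots> \<le> exp (t0 * a) * (\<tau> * a * exp (\<tau> * a)) * K"
  proof (rule mult_mono)
    have st: "\<bar>s - t0\<bar> \<le> \<tau>" using s by auto
    have "\<bar>s - t0\<bar> * a * exp (\<bar>s - t0\<bar> * a) \<le> \<tau> * a * exp (\<tau> * a)"
      using st a0 by (intro mult_mono) (auto intro: mult_right_mono)
    then show "exp (\<bar>t0\<bar> * a) * (\<bar>s - t0\<bar> * a * exp (\<bar>s - t0\<bar> * a)) \<le> exp (t0 * a) * (\<tau> * a * exp (\<tau> * a))"
      using t0 by (simp add: mult_left_mono)
    show "0 \<le> exp (t0 * a) * (\<tau> * a * exp (\<tau> * a))" using s a0 by auto
  qed (use nx in auto)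
  finally show ?thesis .
qed

lemma Ru_step2:
  fixes A :: "real^'n^'n"
  assumes bA: "bnd A a" and tau: "\<tau> > 0" and t0: "t0 \<ge> 0" and U: "convex U" "closed U"
    and K: "\<And>u. u \<in> U \<Longrightarrow> norm u \<le> K"
    and w: "w measurable_on {0..t0 + \<tau>}" and wU: "\<And>s. s \<in> {0..t0 + \<tau>} \<Longrightarrow> w s \<in> U"
  shows "\<exists>ub\<in>U. norm (integral {0..t0 + \<tau>} (\<lambda>s. mexp (s *\<^sub>R A) *v w s)
      - (integral {0..t0} (\<lambda>s. mexp (s *\<^sub>R A) *v w s) + \<tau> *\<^sub>R (mexp (t0 *\<^sub>R A) *v ub)))
      \<le> \<tau> * (exp (t0 * a) * (\<tau> * a * exp (\<tau> * a)) * K)"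
proof -
  define g where "g s = mexp (s *\<^sub>R A) *v w s" for s
  have a0: "a \<ge> 0" by (rule bnd_nonneg[OF bA])
  have wK: "norm (w s) \<le> K" if "s \<in> {0..t0 + \<tau>}" for s using K[OF wU[OF that]] .
  have gi: "g integrable_on {0..t0 + \<tau>}" unfolding g_def by (rule Ew_integrable(1)[OF bA w wK])
  have wi: "w integrable_on {0..t0 + \<tau>}" by (rule Ew_integrable(2)[OF bA w wK])
  have gi2: "g integrable_on {t0..t0 + \<tau>}" using integrable_subinterval_real[OF gi] t0 by auto
  have wi2: "w integrable_on {t0..t0 + \<tau>}" using integrable_subinterval_real[OF wi] t0 by auto
  have comb: "integral {0..t0} g + integral {t0..t0 + \<tau>} g = integral {0..t0 + \<tau>} g"
    using Henstock_Kurzweil_Integration.integral_combine[OF t0 _ gi] tau by simp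
  define ub where "ub = (1 / \<tau>) *\<^sub>R integral {t0..t0 + \<tau>} w"
  have ubU: "ub \<in> U" unfolding ub_def using convex_mean[OF U wi2] tau t0 wU by auto
  have bl: "bounded_linear ((*v) (mexp (t0 *\<^sub>R A)))" by (rule matrix_vector_mul_bounded_linear)
  have "\<tau> *\<^sub>R (mexp (t0 *\<^sub>R A) *v ub) = mexp (t0 *\<^sub>R A) *v integral {t0..t0 + \<tau>} w"
    unfolding ub_def using tau by (simp add: matrix_vector_mult_scaleR)
  also have "\<dots> = integral {t0..t0 + \<tau>} (\<lambda>s. mexp (t0 *\<^sub>R A) *v w s)"
    using integral_linear[OF wi2 bl] by (simp add: o_def)
  finally have lin: "\<tau> *\<^sub>R (mexp (t0 *\<^sub>R A) *v ub) = integral {t0..t0 + \<tau>} (\<lambda>s. mexp (t0 *\<^sub>R A) *v w s)" .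
  have li2: "(\<lambda>s. mexp (t0 *\<^sub>R A) *v w s) integrable_on {t0..t0 + \<tau>}"
    using integrable_linear[OF wi2 bl] by (simp add: o_def)
  have diff: "integral {0..t0 + \<tau>} g - (integral {0..t0} g + \<tau> *\<^sub>R (mexp (t0 *\<^sub>R A) *v ub))
      = integral {t0..t0 + \<tau>} (\<lambda>s. g s - mexp (t0 *\<^sub>R A) *v w s)"
    unfolding lin comb[symmetric] using integral_diff[OF gi2 li2] by simp
  have "norm (integral {t0..t0 + \<tau>} (\<lambda>s. g s - mexp (t0 *\<^sub>R A) *v w s))
      \<le> exp (t0 * a) * (\<tau> * a * exp (\<tau> * a)) * K * measure lborel {t0..t0 + \<tau>}"
  proof (rule has_integral_bound_real[where S="{}"])
    show "0 \<le> exp (t0 * a) * (\<tau> * a * exp (\<tau> * a)) * K"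
    proof -
      have "0 \<le> K" using K[OF ubU] norm_ge_zero[of ub] by linarith
      then show ?thesis using a0 tau by (intro mult_nonneg_nonneg) auto
    qed
    show "((\<lambda>s. g s - mexp (t0 *\<^sub>R A) *v w s) has_integral integral {t0..t0 + \<tau>} (\<lambda>s. g s - mexp (t0 *\<^sub>R A) *v w s)) {t0..t0 + \<tau>}"
      using integrable_diff[OF gi2 li2] by (simp add: integrable_integral)
    fix s assume "s \<in> {t0..t0 + \<tau>} - {}"
    then have s: "s \<in> {t0..t0 + \<tau>}" by simp
    have "g s - mexp (t0 *\<^sub>R A) *v w s = (mexp (s *\<^sub>R A) - mexp (t0 *\<^sub>R A)) *v w s"
      unfolding g_def by (simp add: matrix_vector_mult_diff_rdistrib)
    moreover have "norm (w s) \<le> K" using wK s t0 by auto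
    ultimately show "norm (g s - mexp (t0 *\<^sub>R A) *v w s) \<le> exp (t0 * a) * (\<tau> * a * exp (\<tau> * a)) * K"
      using Ediff_bound[OF bA s t0] by simp
  qed simp
  then have "norm (integral {0..t0 + \<tau>} g - (integral {0..t0} g + \<tau> *\<^sub>R (mexp (t0 *\<^sub>R A) *v ub)))
      \<le> \<tau> * (exp (t0 * a) * (\<tau> * a * exp (\<tau> * a)) * K)" unfolding diff using tau by (simp add: algebra_simps)
  then show ?thesis using ubU unfolding g_def by blast
qed

lemma Ru_step1:
  fixes A :: "real^'n^'n"
  assumes bA: "bnd A a" and tau: "\<tau> > 0" and t0: "t0 \<ge> 0"
    and K: "\<And>u. u \<in> U \<Longrightarrow> norm u \<le> K" and u: "u \<in> U"
    and w': "w' measurable_on {0..t0}" and wU': "\<And>s. s \<in> {0..t0} \<Longrightarrow> w' s \<in> U"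
  shows "\<exists>w. w measurable_on {0..t0 + \<tau>} \<and> (\<forall>s\<in>{0..t0 + \<tau>}. w s \<in> U) \<and>
      norm (integral {0..t0 + \<tau>} (\<lambda>s. mexp (s *\<^sub>R A) *v w s)
      - (integral {0..t0} (\<lambda>s. mexp (s *\<^sub>R A) *v w' s) + \<tau> *\<^sub>R (mexp (t0 *\<^sub>R A) *v u)))
      \<le> \<tau> * (exp (t0 * a) * (\<tau> * a * exp (\<tau> * a)) * K)"
proof -
  define w where "w s = (if s \<le> t0 then w' s else u)" for s
  have a0: "a \<ge> 0" by (rule bnd_nonneg[OF bA])
  have K0: "K \<ge> 0" using K[OF u] norm_ge_zero[of u] by linarith
  have wU: "\<forall>s\<in>{0..t0 + \<tau>}. w s \<in> U" unfolding w_def using wU' u by auto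
  have wm: "w measurable_on {0..t0 + \<tau>}"
  proof -
    have m1: "(\<lambda>x. if x \<in> {0..t0} then w' x else 0) measurable_on UNIV" using w' measurable_on_UNIV by blast
    have m2: "(\<lambda>x. if x \<in> {t0<..t0 + \<tau>} then u else 0) measurable_on UNIV"
    proof -
      have "\<And>c d::real. {c<..d} \<in> sets lebesgue" by simp
      then have "{t0<..t0 + \<tau>} \<in> sets lebesgue" by blast
      then have "(\<lambda>x. u) measurable_on {t0<..t0 + \<tau>}" by (rule measurable_on_const)
      then show ?thesis by (simp only: measurable_on_UNIV)
    qed
    have "(\<lambda>x. if x \<in> {0..t0 + \<tau>} then w x else 0)
        = (\<lambda>x. (if x \<in> {0..t0} then w' x else 0) + (if x \<in> {t0<..t0 + \<tau>} then u else 0))"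
      unfolding w_def using t0 tau by (intro ext) auto
    then have "(\<lambda>x. if x \<in> {0..t0 + \<tau>} then w x else 0) measurable_on UNIV"
      using measurable_on_add[OF m1 m2] by simp
    then show ?thesis using measurable_on_UNIV by blast
  qed
  define g where "g s = mexp (s *\<^sub>R A) *v w s" for s
  have wK: "norm (w s) \<le> K" if "s \<in> {0..t0 + \<tau>}" for s using K wU that by blast
  have gi: "g integrable_on {0..t0 + \<tau>}" unfolding g_def by (rule Ew_integrable(1)[OF bA wm wK])
  have gi2: "g integrable_on {t0..t0 + \<tau>}" using integrable_subinterval_real[OF gi] t0 by auto
  have comb: "integral {0..t0} g + integral {t0..t0 + \<tau>} g = integral {0..t0 + \<tau>} g"
    using Henstock_Kurzweil_Integration.integral_combine[OF t0 _ gi] tau by simp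
  have same: "integral {0..t0} g = integral {0..t0} (\<lambda>s. mexp (s *\<^sub>R A) *v w' s)"
    unfolding g_def w_def by (rule integral_cong) auto
  have ci: "(\<lambda>s. mexp (t0 *\<^sub>R A) *v u) integrable_on {t0..t0 + \<tau>}" by (rule integrable_const_ivl)
  have cint: "integral {t0..t0 + \<tau>} (\<lambda>s. mexp (t0 *\<^sub>R A) *v u) = \<tau> *\<^sub>R (mexp (t0 *\<^sub>R A) *v u)"
    using tau by simp
  have diff: "integral {0..t0 + \<tau>} g - (integral {0..t0} (\<lambda>s. mexp (s *\<^sub>R A) *v w' s) + \<tau> *\<^sub>R (mexp (t0 *\<^sub>R A) *v u))
      = integral {t0..t0 + \<tau>} (\<lambda>s. g s - mexp (t0 *\<^sub>R A) *v u)"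
    unfolding same[symmetric] comb[symmetric] cint[symmetric] using integral_diff[OF gi2 ci] by simp
  have "norm (integral {t0..t0 + \<tau>} (\<lambda>s. g s - mexp (t0 *\<^sub>R A) *v u))
      \<le> exp (t0 * a) * (\<tau> * a * exp (\<tau> * a)) * K * measure lborel {t0..t0 + \<tau>}"
  proof (rule has_integral_bound_real[where S="{t0}"])
    show "0 \<le> exp (t0 * a) * (\<tau> * a * exp (\<tau> * a)) * K" using a0 tau K0 by (intro mult_nonneg_nonneg) auto
    show "((\<lambda>s. g s - mexp (t0 *\<^sub>R A) *v u) has_integral integral {t0..t0 + \<tau>} (\<lambda>s. g s - mexp (t0 *\<^sub>R A) *v u)) {t0..t0 + \<tau>}"
      using integrable_diff[OF gi2 ci] by (simp add: integrable_integral)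
    fix s assume "s \<in> {t0..t0 + \<tau>} - {t0}"
    then have s: "s \<in> {t0..t0 + \<tau>}" "s > t0" by auto
    have "g s - mexp (t0 *\<^sub>R A) *v u = (mexp (s *\<^sub>R A) - mexp (t0 *\<^sub>R A)) *v u"
      unfolding g_def w_def using s(2) by (simp add: matrix_vector_mult_diff_rdistrib)
    then show "norm (g s - mexp (t0 *\<^sub>R A) *v u) \<le> exp (t0 * a) * (\<tau> * a * exp (\<tau> * a)) * K"
      using Ediff_bound[OF bA s(1) t0 K[OF u]] by simp
  qed simp
  then have "norm (integral {0..t0 + \<tau>} g - (integral {0..t0} (\<lambda>s. mexp (s *\<^sub>R A) *v w' s) + \<tau> *\<^sub>R (mexp (t0 *\<^sub>R A) *v u)))
      \<le> \<tau> * (exp (t0 * a) * (\<tau> * a * exp (\<tau> * a)) * K)" unfolding diff using tau by (simp add: algebra_simps)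
  then show ?thesis using wm wU unfolding g_def by blast
qed

lemma Ru_restrict:
  fixes A :: "real^'n^'n"
  assumes bA: "bnd A a" and s: "0 \<le> s" "s \<le> t" and K: "\<And>u. u \<in> U \<Longrightarrow> norm u \<le> K"
    and z: "z \<in> Ru A U t"
  shows "\<exists>z'\<in>Ru A U s. norm (z - z') \<le> (t - s) * (exp (t * a) * K)"
proof -
  obtain w where z: "z = integral {0..t} (\<lambda>s. mexp (s *\<^sub>R A) *v w s)" and w: "w measurable_on {0..t}"
    and wU: "\<forall>s\<in>{0..t}. w s \<in> U" using z unfolding Ru_def by blast
  have a0: "a \<ge> 0" by (rule bnd_nonneg[OF bA])
  define g where "g s = mexp (s *\<^sub>R A) *v w s" for s
  have wK: "norm (w \<sigma>) \<le> K" if "\<sigma> \<in> {0..t}" for \<sigma> using K wU that by blast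
  have gi: "g integrable_on {0..t}" unfolding g_def by (rule Ew_integrable(1)[OF bA w wK])
  have gi2: "g integrable_on {s..t}" using integrable_subinterval_real[OF gi] s by auto
  have comb: "integral {0..s} g + integral {s..t} g = integral {0..t} g"
    using Henstock_Kurzweil_Integration.integral_combine[OF s gi] .
  have ws: "w measurable_on {0..s}" using meas_restrict[OF w] s by auto
  have z': "integral {0..s} g \<in> Ru A U s" unfolding Ru_def g_def using ws wU s by auto
  have "norm (integral {s..t} g) \<le> exp (t * a) * K * measure lborel {s..t}"
  proof (rule has_integral_bound_real[where S="{}"])
    have "0 \<in> {0..t}" using s by auto
    then have "0 \<le> K" using order_trans[OF norm_ge_zero wK] by blast
    then show "0 \<le> exp (t * a) * K" by simp
    show "(g has_integral integral {s..t} g) {s..t}" using gi2 by (simp add: integrable_integral)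
    fix \<sigma> assume "\<sigma> \<in> {s..t} - {}"
    then have \<sigma>: "\<sigma> \<in> {0..t}" using s by auto
    have "norm (g \<sigma>) \<le> exp (\<bar>\<sigma>\<bar> * a) * norm (w \<sigma>)" unfolding g_def by (rule bndD[OF bnd_mexp[OF bA]])
    also have "\<dots> \<le> exp (t * a) * K" using \<sigma> a0 wK[OF \<sigma>] by (intro mult_mono) (auto intro: mult_right_mono)
    finally show "norm (g \<sigma>) \<le> exp (t * a) * K" .
  qed simp
  then have "norm (z - integral {0..s} g) \<le> (t - s) * (exp (t * a) * K)"
    unfolding z g_def[symmetric] comb[symmetric] using s by (simp add: algebra_simps)
  then show ?thesis using z' by blast
qed


(* ---- part F ---- *)

fun Qset :: "real^'n^'n \<Rightarrow> real \<Rightarrow> (real^'n) set \<Rightarrow> nat \<Rightarrow> (real^'n) set" where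
  "Qset E t U 0 = {0}"
| "Qset E t U (Suc i) = msum (Qset E t U i) ((\<lambda>u. t *\<^sub>R (matpow E i *v u)) ` U)"

lemma close_refl0: "close 0 X X" unfolding close_def by auto

lemma W_close:
  assumes d: "\<delta> \<ge> 0"
    and V: "\<And>j. j < i \<Longrightarrow> close \<delta> (zset nq (Vrep nn nq A T N U j))
       ((\<lambda>u. (T / real N) *\<^sub>R (matpow (mexp ((T / real N) *\<^sub>R A)) j *v u)) ` zset nq U)"
  shows "close (real i * \<delta>) (Wset nn nq A T N U i) (Qset (mexp ((T / real N) *\<^sub>R A)) (T / real N) (zset nq U) i)"
  using V
proof (induct i)
  case 0 then show ?case by (simp add: close_refl0)
next
  case (Suc i)
  have "close (real i * \<delta> + \<delta>) (Wset nn nq A T N U (Suc i)) (Qset (mexp ((T / real N) *\<^sub>R A)) (T / real N) (zset nq U) (Suc i))"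
    unfolding Wset.simps Qset.simps by (intro close_msum Suc) auto
  then show ?case by (simp add: algebra_simps)
qed

lemma Ru_zero: assumes "u \<in> U" shows "Ru A U 0 = {0}"
proof -
  have "(\<lambda>s. u) measurable_on {0..(0::real)}" by (rule measurable_on_const) simp
  then have "integral {0..0} (\<lambda>s. mexp (s *\<^sub>R A) *v (\<lambda>s. u) s) \<in> Ru A U 0" unfolding Ru_def using assms
    by (intro CollectI exI[of _ "\<lambda>s. u"]) auto
  then show ?thesis unfolding Ru_def by auto
qed

lemma Q_Ru_close:
  fixes A :: "real^'n^'n"
  assumes bA: "bnd A a" and tau: "\<tau> > 0" and U: "convex U" "closed U" "U \<noteq> {}"
    and K: "\<And>u. u \<in> U \<Longrightarrow> norm u \<le> K"
  shows "real i * \<tau> \<le> T \<Longrightarrow> close (real i * (\<tau> * (exp (T * a) * (\<tau> * a) * K))) (Qset (mexp (\<tau> *\<^sub>R A)) \<tau> U i) (Ru A U (real i * \<tau>))"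
proof (induct i)
  case 0
  obtain u where "u \<in> U" using U(3) by blast
  then show ?case using Ru_zero[of u U A] by (simp add: close_refl0)
next
  case (Suc i)
  have a0: "a \<ge> 0" by (rule bnd_nonneg[OF bA])
  obtain u0 where u0: "u0 \<in> U" using U(3) by blast
  have K0: "K \<ge> 0" using K[OF u0] norm_ge_zero[of u0] by linarith
  define t0 where "t0 = real i * \<tau>"
  have t0: "t0 \<ge> 0" unfolding t0_def using tau by simp
  have tT: "t0 + \<tau> \<le> T" using Suc(2) unfolding t0_def by (simp add: algebra_simps)
  have IH: "close (real i * (\<tau> * (exp (T * a) * (\<tau> * a) * K))) (Qset (mexp (\<tau> *\<^sub>R A)) \<tau> U i) (Ru A U t0)"
    using Suc tau unfolding t0_def by (intro Suc(1)) (simp_all add: algebra_simps)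
  have st: "\<tau> * (exp (t0 * a) * (\<tau> * a * exp (\<tau> * a)) * K) \<le> \<tau> * (exp (T * a) * (\<tau> * a) * K)"
  proof -
    have "(t0 + \<tau>) * a \<le> T * a" using tT a0 by (rule mult_right_mono)
    then have "exp (t0 * a) * exp (\<tau> * a) \<le> exp (T * a)" by (simp add: exp_add[symmetric] algebra_simps)
    then have "exp (t0 * a) * exp (\<tau> * a) * (\<tau> * a) \<le> exp (T * a) * (\<tau> * a)" using tau a0 by (simp add: mult_right_mono)
    then have "exp (t0 * a) * exp (\<tau> * a) * (\<tau> * a) * K \<le> exp (T * a) * (\<tau> * a) * K" using K0 by (rule mult_right_mono)
    then have "\<tau> * (exp (t0 * a) * exp (\<tau> * a) * (\<tau> * a) * K) \<le> \<tau> * (exp (T * a) * (\<tau> * a) * K)" using tau by (intro mult_left_mono) auto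
    then show ?thesis by (simp add: algebra_simps)
  qed
  define d where "d = real i * (\<tau> * (exp (T * a) * (\<tau> * a) * K))"
  have Em: "matpow (mexp (\<tau> *\<^sub>R A)) i = mexp (t0 *\<^sub>R A)" unfolding t0_def by (simp add: mexp_matpow)
  have tS: "real (Suc i) * \<tau> = t0 + \<tau>" unfolding t0_def by (simp add: algebra_simps)
  have goal: "close (d + \<tau> * (exp (T * a) * (\<tau> * a) * K)) (Qset (mexp (\<tau> *\<^sub>R A)) \<tau> U (Suc i)) (Ru A U (t0 + \<tau>))"
    unfolding close_def Qset.simps msum_def Em
  proof (intro conjI ballI)
    fix y assume "y \<in> {x + y |x y. x \<in> Qset (mexp (\<tau> *\<^sub>R A)) \<tau> U i \<and> y \<in> (\<lambda>u. \<tau> *\<^sub>R (mexp (t0 *\<^sub>R A) *v u)) ` U}"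
    then obtain y' u where y: "y = y' + \<tau> *\<^sub>R (mexp (t0 *\<^sub>R A) *v u)" "y' \<in> Qset (mexp (\<tau> *\<^sub>R A)) \<tau> U i" "u \<in> U" by blast
    obtain z' where z': "z' \<in> Ru A U t0" "norm (y' - z') \<le> d" using IH y(2) unfolding close_def d_def by blast
    obtain w' where w': "z' = integral {0..t0} (\<lambda>s. mexp (s *\<^sub>R A) *v w' s)" "w' measurable_on {0..t0}" "\<forall>s\<in>{0..t0}. w' s \<in> U"
      using z'(1) unfolding Ru_def by blast
    obtain w where w: "w measurable_on {0..t0 + \<tau>}" "\<forall>s\<in>{0..t0 + \<tau>}. w s \<in> U"
      "norm (integral {0..t0 + \<tau>} (\<lambda>s. mexp (s *\<^sub>R A) *v w s) - (z' + \<tau> *\<^sub>R (mexp (t0 *\<^sub>R A) *v u)))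
        \<le> \<tau> * (exp (t0 * a) * (\<tau> * a * exp (\<tau> * a)) * K)"
      using Ru_step1[OF bA tau t0 K y(3) w'(2)] w'(3) unfolding w'(1) by blast
    define z where "z = integral {0..t0 + \<tau>} (\<lambda>s. mexp (s *\<^sub>R A) *v w s)"
    have zR: "z \<in> Ru A U (t0 + \<tau>)" unfolding z_def Ru_def using w by blast
    have "norm (y - z) \<le> norm (y' - z') + norm (z - (z' + \<tau> *\<^sub>R (mexp (t0 *\<^sub>R A) *v u)))"
      unfolding y(1) using norm_triangle_ineq[of "y' - z'" "(z' + \<tau> *\<^sub>R (mexp (t0 *\<^sub>R A) *v u)) - z"]
      by (simp add: algebra_simps norm_minus_commute)
    also have "\<dots> \<le> d + \<tau> * (exp (T * a) * (\<tau> * a) * K)" using z'(2) w(3) st unfolding z_def by linarith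
    finally show "\<exists>z\<in>Ru A U (t0 + \<tau>). norm (y - z) \<le> d + \<tau> * (exp (T * a) * (\<tau> * a) * K)" using zR by blast
  next
    fix z assume "z \<in> Ru A U (t0 + \<tau>)"
    then obtain w where w: "z = integral {0..t0 + \<tau>} (\<lambda>s. mexp (s *\<^sub>R A) *v w s)" "w measurable_on {0..t0 + \<tau>}" "\<forall>s\<in>{0..t0 + \<tau>}. w s \<in> U"
      unfolding Ru_def by blast
    obtain ub where ub: "ub \<in> U" "norm (z - (integral {0..t0} (\<lambda>s. mexp (s *\<^sub>R A) *v w s) + \<tau> *\<^sub>R (mexp (t0 *\<^sub>R A) *v ub)))
        \<le> \<tau> * (exp (t0 * a) * (\<tau> * a * exp (\<tau> * a)) * K)"
      using Ru_step2[OF bA tau t0 U(1,2) K w(2)] w(3) unfolding w(1) by blast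
    define z' where "z' = integral {0..t0} (\<lambda>s. mexp (s *\<^sub>R A) *v w s)"
    have z'R: "z' \<in> Ru A U t0" unfolding z'_def Ru_def using meas_restrict[OF w(2)] w(3) t0 tau by force
    obtain y' where y': "y' \<in> Qset (mexp (\<tau> *\<^sub>R A)) \<tau> U i" "norm (y' - z') \<le> d" using IH z'R unfolding close_def d_def by blast
    define y where "y = y' + \<tau> *\<^sub>R (mexp (t0 *\<^sub>R A) *v ub)"
    have yQ: "y \<in> {x + y |x y. x \<in> Qset (mexp (\<tau> *\<^sub>R A)) \<tau> U i \<and> y \<in> (\<lambda>u. \<tau> *\<^sub>R (mexp (t0 *\<^sub>R A) *v u)) ` U}"
      unfolding y_def using y'(1) ub(1) by blast
    have "norm (y - z) \<le> norm (y' - z') + norm (z - (z' + \<tau> *\<^sub>R (mexp (t0 *\<^sub>R A) *v ub)))"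
      unfolding y_def using norm_triangle_ineq[of "y' - z'" "(z' + \<tau> *\<^sub>R (mexp (t0 *\<^sub>R A) *v ub)) - z"]
      by (simp add: algebra_simps norm_minus_commute)
    also have "\<dots> \<le> d + \<tau> * (exp (T * a) * (\<tau> * a) * K)" using y'(2) ub(2) st unfolding z'_def by linarith
    finally show "\<exists>y\<in>{x + y |x y. x \<in> Qset (mexp (\<tau> *\<^sub>R A)) \<tau> U i \<and> y \<in> (\<lambda>u. \<tau> *\<^sub>R (mexp (t0 *\<^sub>R A) *v u)) ` U}.
        norm (y - z) \<le> d + \<tau> * (exp (T * a) * (\<tau> * a) * K)" using yQ by blast
  qed
  then show ?case unfolding tS d_def by (simp add: algebra_simps)
qed


(* ---- part G ---- *)

lemma close_trans: assumes c1: "close d1 X Y" and c2: "close d2 Y Z" shows "close (d1 + d2) X Z"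
proof -
  have t: "norm (x - z) \<le> d1 + d2" if "norm (x - y) \<le> d1" "norm (y - z) \<le> d2" for x y z :: 'a
    using norm_triangle_ineq[of "x - y" "y - z"] that by simp
  show ?thesis unfolding close_def
  proof (intro conjI ballI)
    fix x assume "x \<in> X"
    then obtain y where "y \<in> Y" "norm (x - y) \<le> d1" using c1 unfolding close_def by blast
    moreover then obtain z where "z \<in> Z" "norm (y - z) \<le> d2" using c2 unfolding close_def by blast
    ultimately show "\<exists>z\<in>Z. norm (x - z) \<le> d1 + d2" using t by blast
  next
    fix z assume "z \<in> Z"
    then obtain y where "y \<in> Y" "norm (y - z) \<le> d2" using c2 unfolding close_def by blast
    moreover then obtain x where "x \<in> X" "norm (x - y) \<le> d1" using c1 unfolding close_def by blast
    ultimately show "\<exists>x\<in>X. norm (x - z) \<le> d1 + d2" using t by blast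
  qed
qed

lemma zset_image: "zset np (c, G) = (\<lambda>b. c + G *v b) ` nball np"
  unfolding zset_def by auto

lemma zset_props:
  fixes np :: "real^'p \<Rightarrow> real" and G :: "real^'p^'n"
  assumes np: "is_norm np" and rho: "\<And>b. b \<in> nball np \<Longrightarrow> norm b \<le> \<rho>" and bG: "bnd G g"
  shows "convex (zset np (c, G))" "closed (zset np (c, G))" "zset np (c, G) \<noteq> {}"
    "\<And>u. u \<in> zset np (c, G) \<Longrightarrow> norm u \<le> norm c + g * \<rho>"
proof -
  have cvx: "convex (nball np)"
    unfolding convex_def nball_def
  proof (intro ballI allI impI, simp)
    fix x y :: "real^'p" and u v :: real assume "np x \<le> 1" "np y \<le> 1" "0 \<le> u" "0 \<le> v" "u + v = 1"
    then have "np (u *\<^sub>R x + v *\<^sub>R y) \<le> u * np x + v * np y"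
      using is_normD(3,4)[OF np] by (metis abs_of_nonneg)
    also have "\<dots> \<le> u * 1 + v * 1" using \<open>np x \<le> 1\<close> \<open>np y \<le> 1\<close> \<open>0 \<le> u\<close> \<open>0 \<le> v\<close> by (intro add_mono mult_left_mono)
    finally show "np (u *\<^sub>R x + v *\<^sub>R y) \<le> 1" using \<open>u + v = 1\<close> by simp
  qed
  have aff: "(\<lambda>b. c + G *v b) = (\<lambda>x. c + x) \<circ> (\<lambda>b. G *v b)" by auto
  show "convex (zset np (c, G))" unfolding zset_image aff image_comp[symmetric]
    by (intro convex_translation convex_linear_image cvx matrix_vector_mul_linear)
  have "closed (nball np)" unfolding nball_def
    by (rule closed_Collect_le[OF norm_cont[OF np] continuous_on_const])
  moreover have "bounded (nball np)" unfolding bounded_iff using rho by blast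
  ultimately have "compact (nball np)" by (simp add: compact_eq_bounded_closed)
  moreover have "continuous_on (nball np) (\<lambda>b. c + G *v b)" by (intro continuous_intros)
  ultimately have "compact (zset np (c, G))" unfolding zset_image by (rule compact_continuous_image[rotated])
  then show "closed (zset np (c, G))" by (rule compact_imp_closed)
  have "0 \<in> nball np" unfolding nball_def using is_normD(2)[OF np, of 0] by simp
  then show "zset np (c, G) \<noteq> {}" unfolding zset_image by blast
  fix u assume "u \<in> zset np (c, G)"
  then obtain b where u: "u = c + G *v b" "b \<in> nball np" unfolding zset_image by blast
  have g0: "g \<ge> 0" by (rule bnd_nonneg[OF bG])
  have "norm u \<le> norm c + norm (G *v b)" unfolding u by (rule norm_triangle_ineq)
  also have "\<dots> \<le> norm c + g * \<rho>" using bndD[OF bG, of b] rho[OF u(2)] g0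
    by (meson add_left_mono mult_left_mono order_trans)
  finally show "norm u \<le> norm c + g * \<rho>" .
qed


(* ---- part H ---- *)

lemma tau_facts:
  assumes T: "T > 0" and N: "N \<ge> (1::nat)"
  shows "T / real N > 0" "T / real N \<le> T" "real N * (T / real N) = T"
    "\<And>i. i \<le> N \<Longrightarrow> real i * (T / real N) \<le> T"
proof -
  show "T / real N > 0" using T N by simp
  show "T / real N \<le> T" using T N by (simp add: divide_le_eq)
  show "real N * (T / real N) = T" using N by simp
  fix i assume "i \<le> N"
  then have "real i * (T / real N) \<le> real N * (T / real N)" using T N by (intro mult_right_mono) auto
  then show "real i * (T / real N) \<le> T" using N by simp
qed

lemma inv_sq_le: assumes N: "N \<ge> (1::nat)" and i: "i \<le> N"
  shows "real i * (1 - (1 - 1 / (real N)^2)) \<le> 1 / real N"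
proof -
  have "real i * (1 - (1 - 1 / (real N)^2)) = real i / (real N)^2" by simp
  also have "\<dots> \<le> real N / (real N)^2" using i N by (intro divide_right_mono) auto
  also have "\<dots> = 1 / real N" using N by (simp add: power2_eq_square)
  finally show ?thesis .
qed

lemma arith_S:
  assumes T: "T > 0" and N: "N \<ge> (1::nat)" and i: "i \<le> N"
    and a: "a \<ge> 0" and K0: "K0 \<ge> 0" and g: "g \<ge> 0" and \<rho>: "\<rho> \<ge> 0"
  defines "\<tau> \<equiv> T / real N"
  shows "real i * (\<tau> * a) ^ 2 * exp (real i * (\<tau> * a)) * K0
       + real i * (1 - (1 - 1 / (real N)^2)) * (exp (real i * (\<tau> * a)) * (g * \<rho>))
     \<le> \<tau> * (T * a ^ 2 * exp (T * a) * K0 + exp (T * a) * (g * \<rho>) / T)"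
proof -
  have tp: "\<tau> > 0" "real i * \<tau> \<le> T" using tau_facts[OF T N] i unfolding \<tau>_def by auto
  have ex: "exp (real i * (\<tau> * a)) \<le> exp (T * a)"
    using mult_right_mono[OF tp(2) a] by (simp add: mult.assoc)
  have "real i * (\<tau> * a) ^ 2 * exp (real i * (\<tau> * a)) * K0 = (real i * \<tau>) * (\<tau> * a ^ 2 * exp (real i * (\<tau> * a)) * K0)"
    by (simp add: power2_eq_square algebra_simps)
  also have "\<dots> \<le> T * (\<tau> * a ^ 2 * exp (T * a) * K0)"
    using tp a K0 ex T by (intro mult_mono) (auto intro!: mult_right_mono mult_left_mono)
  finally have 1: "real i * (\<tau> * a) ^ 2 * exp (real i * (\<tau> * a)) * K0 \<le> \<tau> * (T * a ^ 2 * exp (T * a) * K0)"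
    by (simp add: algebra_simps)
  have "real i * (1 - (1 - 1 / (real N)^2)) * (exp (real i * (\<tau> * a)) * (g * \<rho>)) \<le> (1 / real N) * (exp (T * a) * (g * \<rho>))"
    using inv_sq_le[OF N i] ex g \<rho> by (intro mult_mono) auto
  also have "(1 / real N) = \<tau> / T" unfolding \<tau>_def using T by simp
  finally have 2: "real i * (1 - (1 - 1 / (real N)^2)) * (exp (real i * (\<tau> * a)) * (g * \<rho>)) \<le> \<tau> * (exp (T * a) * (g * \<rho>) / T)"
    by simp
  show ?thesis using 1 2 by (simp add: distrib_left)
qed

lemma arith_V:
  assumes T: "T > 0" and N: "N \<ge> (1::nat)" and j: "j < N"
    and a: "a \<ge> 0" and K: "K \<ge> 0" and g: "g \<ge> 0" and \<rho>: "\<rho> \<ge> 0"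
  defines "\<tau> \<equiv> T / real N"
  shows "(exp (real j * (\<tau> * a)) * (\<tau> ^ 2 * a * exp (\<tau> * a)) + \<tau> * (real j * (\<tau> * a) ^ 2 * exp (real j * (\<tau> * a)))) * K
       + ((1 - (1 - 1 / real N)) + real j * (1 - (1 - 1 / (real N)^2))) * ((exp (real j * (\<tau> * a)) * (\<tau> * exp (\<tau> * a))) * (g * \<rho>))
     \<le> \<tau> ^ 2 * ((a + T * a ^ 2) * exp (T * a) * K + 2 * exp (T * a) * (g * \<rho>) / T)"
proof -
  have tp: "\<tau> > 0" "real j * \<tau> \<le> T" "real j * \<tau> + \<tau> \<le> T" using tau_facts(1)[OF T N] tau_facts(4)[OF T N, of j] tau_facts(4)[OF T N, of "Suc j"] j
    unfolding \<tau>_def by (auto simp: algebra_simps add_divide_distrib)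
  have ex1: "exp (real j * (\<tau> * a)) \<le> exp (T * a)"
    using mult_right_mono[OF tp(2) a] by (simp add: mult.assoc)
  have ex2: "exp (real j * (\<tau> * a)) * exp (\<tau> * a) \<le> exp (T * a)"
    using mult_right_mono[OF tp(3) a] by (simp add: exp_add[symmetric] algebra_simps)
  have A1: "exp (real j * (\<tau> * a)) * (\<tau> ^ 2 * a * exp (\<tau> * a)) \<le> \<tau> ^ 2 * (a * exp (T * a))"
  proof -
    have "exp (real j * (\<tau> * a)) * (\<tau> ^ 2 * a * exp (\<tau> * a)) = \<tau> ^ 2 * (a * (exp (real j * (\<tau> * a)) * exp (\<tau> * a)))"
      by (simp add: algebra_simps)
    also have "\<dots> \<le> \<tau> ^ 2 * (a * exp (T * a))" using ex2 a by (intro mult_left_mono) auto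
    finally show ?thesis .
  qed
  have A2: "\<tau> * (real j * (\<tau> * a) ^ 2 * exp (real j * (\<tau> * a))) \<le> \<tau> ^ 2 * (T * a ^ 2 * exp (T * a))"
  proof -
    have "\<tau> * (real j * (\<tau> * a) ^ 2 * exp (real j * (\<tau> * a))) = \<tau> ^ 2 * ((real j * \<tau>) * (a ^ 2 * exp (real j * (\<tau> * a))))"
      by (simp add: power2_eq_square algebra_simps)
    also have "\<dots> \<le> \<tau> ^ 2 * (T * (a ^ 2 * exp (T * a)))"
      using tp ex1 T by (intro mult_left_mono mult_mono) auto
    finally show ?thesis by (simp add: algebra_simps)
  qed
  have B1: "(1 - (1 - 1 / real N)) + real j * (1 - (1 - 1 / (real N)^2)) \<le> 2 * (\<tau> / T)"
  proof -
    have "real j * (1 - (1 - 1 / (real N)^2)) \<le> 1 / real N" using inv_sq_le[OF N, of j] j by simp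
    moreover have "1 / real N = \<tau> / T" unfolding \<tau>_def using T by simp
    ultimately show ?thesis by simp
  qed
  have B2: "(exp (real j * (\<tau> * a)) * (\<tau> * exp (\<tau> * a))) * (g * \<rho>) \<le> \<tau> * exp (T * a) * (g * \<rho>)"
  proof -
    have "exp (real j * (\<tau> * a)) * (\<tau> * exp (\<tau> * a)) = \<tau> * (exp (real j * (\<tau> * a)) * exp (\<tau> * a))" by simp
    also have "\<dots> \<le> \<tau> * exp (T * a)" using ex2 tp by (intro mult_left_mono) auto
    finally show ?thesis using g \<rho> by (intro mult_right_mono) auto
  qed
  have "(exp (real j * (\<tau> * a)) * (\<tau> ^ 2 * a * exp (\<tau> * a)) + \<tau> * (real j * (\<tau> * a) ^ 2 * exp (real j * (\<tau> * a)))) * K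
      \<le> (\<tau> ^ 2 * (a * exp (T * a)) + \<tau> ^ 2 * (T * a ^ 2 * exp (T * a))) * K"
    using A1 A2 K by (intro mult_right_mono add_mono) auto
  moreover have "((1 - (1 - 1 / real N)) + real j * (1 - (1 - 1 / (real N)^2))) * ((exp (real j * (\<tau> * a)) * (\<tau> * exp (\<tau> * a))) * (g * \<rho>))
      \<le> (2 * (\<tau> / T)) * (\<tau> * exp (T * a) * (g * \<rho>))"
    by (rule mult_mono[OF B1 B2]) (use tp T g \<rho> in auto)
  moreover have "(\<tau> ^ 2 * (a * exp (T * a)) + \<tau> ^ 2 * (T * a ^ 2 * exp (T * a))) * K + (2 * (\<tau> / T)) * (\<tau> * exp (T * a) * (g * \<rho>))
      = \<tau> ^ 2 * ((a + T * a ^ 2) * exp (T * a) * K + 2 * exp (T * a) * (g * \<rho>) / T)"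
    by (simp add: power2_eq_square algebra_simps)
  ultimately show ?thesis by linarith
qed


(* ---- part I ---- *)

lemma Rt_shift:
  fixes A :: "real^'n^'n"
  assumes bA: "bnd A a" and t0: "0 \<le> t0" "t0 \<le> t" and K0: "\<And>x. x \<in> X \<Longrightarrow> norm x \<le> K0"
    and Ku: "\<And>u. u \<in> U \<Longrightarrow> norm u \<le> Ku" and z: "z \<in> Rt A X U t"
  shows "\<exists>z'\<in>Rt A X U t0. norm (z - z') \<le> (t - t0) * (a * exp (t * a) * K0 + exp (t * a) * Ku)"
proof -
  obtain x0 y where z: "z = mexp (t *\<^sub>R A) *v x0 + y" "x0 \<in> X" "y \<in> Ru A U t"
    using z unfolding Rt_def msum_def Rh_def by blast
  obtain y' where y': "y' \<in> Ru A U t0" "norm (y - y') \<le> (t - t0) * (exp (t * a) * Ku)"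
    using Ru_restrict[OF bA t0 Ku z(3)] by blast
  have "t \<in> {t0..t0 + (t - t0)}" using t0 by simp
  then have "norm ((mexp (t *\<^sub>R A) - mexp (t0 *\<^sub>R A)) *v x0) \<le> exp (t0 * a) * ((t - t0) * a * exp ((t - t0) * a)) * K0"
    by (rule Ediff_bound[OF bA _ t0(1) K0[OF z(2)]])
  also have "\<dots> = (t - t0) * (a * exp (t * a) * K0)"
    by (simp add: exp_add[symmetric] algebra_simps)
  finally have x: "norm (mexp (t *\<^sub>R A) *v x0 - mexp (t0 *\<^sub>R A) *v x0) \<le> (t - t0) * (a * exp (t * a) * K0)"
    by (simp add: matrix_vector_mult_diff_rdistrib)
  have "mexp (t0 *\<^sub>R A) *v x0 + y' \<in> Rt A X U t0" unfolding Rt_def msum_def Rh_def using z(2) y'(1) by blast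
  moreover have "norm (z - (mexp (t0 *\<^sub>R A) *v x0 + y')) \<le> (t - t0) * (a * exp (t * a) * K0 + exp (t * a) * Ku)"
  proof -
    have "norm (z - (mexp (t0 *\<^sub>R A) *v x0 + y')) \<le> norm (mexp (t *\<^sub>R A) *v x0 - mexp (t0 *\<^sub>R A) *v x0) + norm (y - y')"
      unfolding z(1) using norm_triangle_ineq[of "mexp (t *\<^sub>R A) *v x0 - mexp (t0 *\<^sub>R A) *v x0" "y - y'"]
      by (simp add: algebra_simps)
    then show ?thesis using x y'(2) by (simp add: algebra_simps)
  qed
  ultimately show ?thesis by blast
qed

lemma floor_idx:
  assumes tau: "\<tau> > 0" and t: "0 \<le> t" "t \<le> real N * \<tau>"
  shows "real (nat \<lfloor>t / \<tau>\<rfloor>) * \<tau> \<le> t" "t - real (nat \<lfloor>t / \<tau>\<rfloor>) * \<tau> \<le> \<tau>" "nat \<lfloor>t / \<tau>\<rfloor> \<le> N"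
proof -
  have x0: "t / \<tau> \<ge> 0" using t tau by simp
  have r: "real (nat \<lfloor>t / \<tau>\<rfloor>) = of_int \<lfloor>t / \<tau>\<rfloor>" using x0 by simp
  have f1: "of_int \<lfloor>t / \<tau>\<rfloor> \<le> t / \<tau>" by (rule of_int_floor_le)
  have f2: "t / \<tau> < of_int \<lfloor>t / \<tau>\<rfloor> + 1" by (rule real_of_int_floor_add_one_gt)
  show "real (nat \<lfloor>t / \<tau>\<rfloor>) * \<tau> \<le> t" unfolding r using f1 tau by (simp add: le_divide_eq)
  have "t < (of_int \<lfloor>t / \<tau>\<rfloor> + 1) * \<tau>" using f2 pos_divide_less_eq[OF tau] by blast
  then show "t - real (nat \<lfloor>t / \<tau>\<rfloor>) * \<tau> \<le> \<tau>" unfolding r by (simp add: algebra_simps)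
  have "t / \<tau> \<le> real N" using t tau by (simp add: divide_le_eq)
  then have "\<lfloor>t / \<tau>\<rfloor> \<le> int N" by (metis floor_le_iff floor_of_nat of_int_of_nat_eq le_floor_iff order_trans f1)
  then show "nat \<lfloor>t / \<tau>\<rfloor> \<le> N" by simp
qed

theorem theorem2:
  fixes A :: "real^'n^'n" and T :: real
    and X0 :: "(real^'n) \<times> (real^'p^'n)" and U :: "(real^'n) \<times> (real^'q^'n)"
    and nn :: "real^'n \<Rightarrow> real" and np :: "real^'p \<Rightarrow> real" and nq :: "real^'q \<Rightarrow> real"
  assumes "is_norm nn" and "is_norm np" and "is_norm nq"
    and "T > 0"
    and "rank (snd X0) = CARD('n)" and "rank (snd U) = CARD('n)"
  shows "\<exists>D1 D2 D3 D4. D1 \<ge> 0 \<and> D2 \<ge> 0 \<and> D3 \<ge> 0 \<and> D4 \<ge> 0 \<and>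
    (\<forall>N::nat. N \<ge> 1 \<and> T / real N \<in> Iset A \<and> (T / real N) * opnorm nn nn A \<le> 1 \<longrightarrow>
      (\<forall>i\<le>N.
         hausd nn (zset np (Srep nn np A T N X0 i)) (Rh A (zset np X0) (real i * (T / real N)))
           \<le> D1 * (T / real N) \<and>
         hausd nn (Wset nn nq A T N U i) (Ru A (zset nq U) (real i * (T / real N)))
           \<le> D2 * (T / real N) \<and>
         hausd nn (Lset nn np nq A T N X0 U i) (Rt A (zset np X0) (zset nq U) (real i * (T / real N)))
           \<le> D3 * (T / real N)) \<and>
      hausd nn (\<Union>i\<in>{0..N}. Lset nn np nq A T N X0 U i) (Rint A (zset np X0) (zset nq U) T)
           \<le> D4 * (T / real N))"
proof -
  note nn = assms(1) and np = assms(2) and nq = assms(3) and T = assms(4)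
  define a where "a = onorm ((*v) A)"
  have bA: "bnd A a" unfolding a_def by (rule bnd_onorm)
  have a0: "a \<ge> 0" by (rule bnd_nonneg[OF bA])
  obtain Cn where Cn: "Cn \<ge> 0" "\<And>x. nn x \<le> Cn * norm x" using norm_upper[OF nn] by blast
  obtain \<rho>p where \<rho>p: "\<rho>p \<ge> 0" "\<And>b. b \<in> nball np \<Longrightarrow> norm b \<le> \<rho>p" using nball_bound[OF np] by blast
  obtain \<rho>q where \<rho>q: "\<rho>q \<ge> 0" "\<And>b. b \<in> nball nq \<Longrightarrow> norm b \<le> \<rho>q" using nball_bound[OF nq] by blast
  define g0 where "g0 = onorm ((*v) (snd X0))"
  have bG0: "bnd (snd X0) g0" unfolding g0_def by (rule bnd_onorm)
  have g00: "g0 \<ge> 0" by (rule bnd_nonneg[OF bG0])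
  define gu where "gu = onorm ((*v) (snd U))"
  have bGu: "bnd (snd U) gu" unfolding gu_def by (rule bnd_onorm)
  have gu0: "gu \<ge> 0" by (rule bnd_nonneg[OF bGu])
  define K0 where "K0 = norm (fst X0) + g0 * \<rho>p"
  define Ku where "Ku = norm (fst U) + gu * \<rho>q"
  have K00: "K0 \<ge> 0" unfolding K0_def using g00 \<rho>p by simp
  have Ku0: "Ku \<ge> 0" unfolding Ku_def using gu0 \<rho>q by simp
  have X0eq: "zset np X0 = zset np (fst X0, snd X0)" by simp
  have Ueq: "zset nq U = zset nq (fst U, snd U)" by simp
  have X0K: "\<And>x. x \<in> zset np X0 \<Longrightarrow> norm x \<le> K0"
    unfolding X0eq K0_def using zset_props(4)[OF np \<rho>p(2) bG0] by blast
  have UK: "\<And>u. u \<in> zset nq U \<Longrightarrow> norm u \<le> Ku"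
    unfolding Ueq Ku_def using zset_props(4)[OF nq \<rho>q(2) bGu] by blast
  have Ucvx: "convex (zset nq U)" "closed (zset nq U)" "zset nq U \<noteq> {}"
    unfolding Ueq using zset_props(1-3)[OF nq \<rho>q(2) bGu] by blast+
  define D1 where "D1 = T * a ^ 2 * exp (T * a) * K0 + exp (T * a) * (g0 * \<rho>p) / T"
  define DV where "DV = (a + T * a ^ 2) * exp (T * a) * Ku + 2 * exp (T * a) * (gu * \<rho>q) / T"
  define D2 where "D2 = T * DV + T * (exp (T * a) * a * Ku)"
  define D3 where "D3 = D1 + D2"
  define D4 where "D4 = D3 + (a * exp (T * a) * K0 + exp (T * a) * Ku)"
  have D10: "D1 \<ge> 0" unfolding D1_def using T a0 K00 g00 \<rho>p by simp
  have DV0: "DV \<ge> 0" unfolding DV_def using T a0 Ku0 gu0 \<rho>q by simp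
  have D20: "D2 \<ge> 0" unfolding D2_def using T a0 Ku0 DV0 by simp
  have D30: "D3 \<ge> 0" unfolding D3_def using D10 D20 by simp
  have D40: "D4 \<ge> 0" unfolding D4_def using D30 a0 K00 Ku0 by simp
  have main: "(\<forall>i\<le>N.
         hausd nn (zset np (Srep nn np A T N X0 i)) (Rh A (zset np X0) (real i * (T / real N)))
           \<le> Cn * D1 * (T / real N) \<and>
         hausd nn (Wset nn nq A T N U i) (Ru A (zset nq U) (real i * (T / real N)))
           \<le> Cn * D2 * (T / real N) \<and>
         hausd nn (Lset nn np nq A T N X0 U i) (Rt A (zset np X0) (zset nq U) (real i * (T / real N)))
           \<le> Cn * D3 * (T / real N)) \<and>
      hausd nn (\<Union>i\<in>{0..N}. Lset nn np nq A T N X0 U i) (Rint A (zset np X0) (zset nq U) T)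
           \<le> Cn * D4 * (T / real N)"
    if N: "N \<ge> 1" and ta: "(T / real N) * opnorm nn nn A \<le> 1" for N :: nat
  proof -
    define \<tau> where "\<tau> = T / real N"
    have tp: "\<tau> > 0" "\<tau> \<le> T" "real N * \<tau> = T" "\<And>i. i \<le> N \<Longrightarrow> real i * \<tau> \<le> T"
      using tau_facts[OF T N] unfolding \<tau>_def by auto
    have ta': "\<tau> * opnorm nn nn A \<le> 1" using ta unfolding \<tau>_def .
    have NN: "real N \<ge> 1" using N by simp
    have e0: "0 \<le> 1 - 1 / (real N)^2" using NN by (simp add: power_le_one field_simps)
    have e1: "1 - 1 / (real N)^2 < 1" using NN by simp
    have f0: "0 \<le> 1 - 1 / real N" using NN by simp
    have f1: "1 - 1 / real N < 1" using NN by simp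
    have cS: "close (\<tau> * D1) (zset np (Srep nn np A T N X0 i)) (Rh A (zset np X0) (real i * \<tau>))" if i: "i \<le> N" for i
    proof -
      have c: "close (real i * (\<tau> * a) ^ 2 * exp (real i * (\<tau> * a)) * (norm (fst X0) + g0 * \<rho>p)
          + real i * (1 - (1 - 1 / (real N)^2)) * (exp (real i * (\<tau> * a)) * (g0 * \<rho>p)))
          (zset np (Srep nn np A T N X0 i)) (Rh A (zset np X0) (real i * \<tau>))"
        unfolding Srep_def \<tau>_def[symmetric]
        by (rule S_close[OF nn np less_imp_le[OF tp(1)] e0 e1 bA bG0 \<rho>p(2)])
      have b: "real i * (\<tau> * a) ^ 2 * exp (real i * (\<tau> * a)) * (norm (fst X0) + g0 * \<rho>p)
          + real i * (1 - (1 - 1 / (real N)^2)) * (exp (real i * (\<tau> * a)) * (g0 * \<rho>p)) \<le> \<tau> * D1"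
        using arith_S[OF T N i a0 K00 g00 \<rho>p(1)] unfolding D1_def \<tau>_def K0_def by simp
      show ?thesis by (rule close_mono[OF c b])
    qed
    have cW: "close (\<tau> * D2) (Wset nn nq A T N U i) (Ru A (zset nq U) (real i * \<tau>))" if i: "i \<le> N" for i
    proof -
      have cV: "close (\<tau> ^ 2 * DV) (zset nq (Vrep nn nq A T N U j))
          ((\<lambda>u. (T / real N) *\<^sub>R (matpow (mexp ((T / real N) *\<^sub>R A)) j *v u)) ` zset nq U)" if j: "j < i" for j
      proof -
        have c: "close ((exp (real j * (\<tau> * a)) * (\<tau> ^ 2 * a * exp (\<tau> * a)) + \<tau> * (real j * (\<tau> * a) ^ 2 * exp (real j * (\<tau> * a))))
           * (norm (fst U) + gu * \<rho>q)
           + ((1 - (1 - 1 / real N)) + real j * (1 - (1 - 1 / (real N)^2))) * ((exp (real j * (\<tau> * a)) * (\<tau> * exp (\<tau> * a))) * (gu * \<rho>q)))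
           (zset nq (Vrep nn nq A T N U j))
           ((\<lambda>u. \<tau> *\<^sub>R (matpow (mexp (\<tau> *\<^sub>R A)) j *v u)) ` zset nq U)"
          unfolding Vrep_def \<tau>_def[symmetric]
          by (rule V_close[OF nn nq tp(1) ta' e0 e1 f0 f1 bA bGu \<rho>q(2)])
        have jN: "j < N" using j i by simp
        have b: "(exp (real j * (\<tau> * a)) * (\<tau> ^ 2 * a * exp (\<tau> * a)) + \<tau> * (real j * (\<tau> * a) ^ 2 * exp (real j * (\<tau> * a))))
           * (norm (fst U) + gu * \<rho>q)
           + ((1 - (1 - 1 / real N)) + real j * (1 - (1 - 1 / (real N)^2))) * ((exp (real j * (\<tau> * a)) * (\<tau> * exp (\<tau> * a))) * (gu * \<rho>q))
           \<le> \<tau> ^ 2 * DV"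
          using arith_V[OF T N jN a0 Ku0 gu0 \<rho>q(1)] unfolding DV_def \<tau>_def Ku_def by simp
        show ?thesis using close_mono[OF c b] unfolding \<tau>_def .
      qed
      have c1: "close (real i * (\<tau> ^ 2 * DV)) (Wset nn nq A T N U i) (Qset (mexp (\<tau> *\<^sub>R A)) \<tau> (zset nq U) i)"
        unfolding \<tau>_def by (rule W_close[OF _ cV[unfolded \<tau>_def]]) (use DV0 in simp)
      have c2: "close (real i * (\<tau> * (exp (T * a) * (\<tau> * a) * Ku))) (Qset (mexp (\<tau> *\<^sub>R A)) \<tau> (zset nq U) i) (Ru A (zset nq U) (real i * \<tau>))"
        by (rule Q_Ru_close[OF bA tp(1) Ucvx UK tp(4)[OF i]])
      have "real i * (\<tau> ^ 2 * DV) + real i * (\<tau> * (exp (T * a) * (\<tau> * a) * Ku))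
          = (real i * \<tau>) * (\<tau> * (DV + exp (T * a) * a * Ku))" by (simp add: power2_eq_square algebra_simps)
      also have "\<dots> \<le> T * (\<tau> * (DV + exp (T * a) * a * Ku))"
        using tp(1) tp(4)[OF i] DV0 a0 Ku0 by (intro mult_right_mono) auto
      also have "\<dots> = \<tau> * D2" unfolding D2_def by (simp add: algebra_simps)
      finally show ?thesis using close_mono[OF close_trans[OF c1 c2]] by blast
    qed
    have cL: "close (\<tau> * D3) (Lset nn np nq A T N X0 U i) (Rt A (zset np X0) (zset nq U) (real i * \<tau>))" if i: "i \<le> N" for i
      unfolding Lset_def Rt_def D3_def distrib_left by (rule close_msum[OF cS[OF i] cW[OF i]])
    have hS: "hausd nn X Y \<le> Cn * D * \<tau>" if "close (\<tau> * D) X Y" "D \<ge> 0" for X Y D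
      using hausd_le_close[OF nn Cn _ that(1)] that(2) tp(1) by (simp add: mult_ac)
    show ?thesis unfolding \<tau>_def[symmetric]
    proof (intro conjI allI impI)
      fix i assume i: "i \<le> N"
      show "hausd nn (zset np (Srep nn np A T N X0 i)) (Rh A (zset np X0) (real i * \<tau>)) \<le> Cn * D1 * \<tau>"
        by (rule hS[OF cS[OF i] D10])
      show "hausd nn (Wset nn nq A T N U i) (Ru A (zset nq U) (real i * \<tau>)) \<le> Cn * D2 * \<tau>"
        by (rule hS[OF cW[OF i] D20])
      show "hausd nn (Lset nn np nq A T N X0 U i) (Rt A (zset np X0) (zset nq U) (real i * \<tau>)) \<le> Cn * D3 * \<tau>"
        by (rule hS[OF cL[OF i] D30])
    next
      have "close (\<tau> * D4) (\<Union>i\<in>{0..N}. Lset nn np nq A T N X0 U i) (Rint A (zset np X0) (zset nq U) T)"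
        unfolding close_def
      proof (intro conjI ballI)
        fix x assume "x \<in> (\<Union>i\<in>{0..N}. Lset nn np nq A T N X0 U i)"
        then obtain i where i: "i \<le> N" "x \<in> Lset nn np nq A T N X0 U i" by auto
        then obtain y where y: "y \<in> Rt A (zset np X0) (zset nq U) (real i * \<tau>)" "norm (x - y) \<le> \<tau> * D3"
          using cL[OF i(1)] unfolding close_def by blast
        have "y \<in> Rint A (zset np X0) (zset nq U) T" unfolding Rint_def using y(1) tp(1) tp(4)[OF i(1)] by auto
        moreover have "\<tau> * D3 \<le> \<tau> * D4" unfolding D4_def using tp(1) a0 K00 Ku0 by (intro mult_left_mono) auto
        ultimately show "\<exists>y\<in>Rint A (zset np X0) (zset nq U) T. norm (x - y) \<le> \<tau> * D4" using y(2) by force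
      next
        fix z assume "z \<in> Rint A (zset np X0) (zset nq U) T"
        then obtain t where t: "t \<in> {0..T}" "z \<in> Rt A (zset np X0) (zset nq U) t" unfolding Rint_def by blast
        define i where "i = nat \<lfloor>t / \<tau>\<rfloor>"
        have fl: "real i * \<tau> \<le> t" "t - real i * \<tau> \<le> \<tau>" "i \<le> N"
        proof -
          have t0: "0 \<le> t" and tN: "t \<le> real N * \<tau>" using t(1) tp(3) by auto
          show "real i * \<tau> \<le> t" "t - real i * \<tau> \<le> \<tau>" "i \<le> N"
            using floor_idx[OF tp(1) t0 tN] unfolding i_def by blast+
        qed
        have i0: "0 \<le> real i * \<tau>" using tp(1) by simp
        obtain z' where z': "z' \<in> Rt A (zset np X0) (zset nq U) (real i * \<tau>)"
          "norm (z - z') \<le> (t - real i * \<tau>) * (a * exp (t * a) * K0 + exp (t * a) * Ku)"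
          using Rt_shift[OF bA i0 fl(1) X0K UK t(2)] by blast
        have "(t - real i * \<tau>) * (a * exp (t * a) * K0 + exp (t * a) * Ku) \<le> \<tau> * (a * exp (T * a) * K0 + exp (T * a) * Ku)"
        proof (rule mult_mono)
          have "t * a \<le> T * a" using t(1) a0 by (intro mult_right_mono) auto
          then have ex: "exp (t * a) \<le> exp (T * a)" by simp
          show "a * exp (t * a) * K0 + exp (t * a) * Ku \<le> a * exp (T * a) * K0 + exp (T * a) * Ku"
            using ex a0 K00 Ku0 by (intro add_mono mult_right_mono mult_left_mono) auto
        qed (use fl(2) tp(1) a0 K00 Ku0 in auto)
        then have z'b: "norm (z - z') \<le> \<tau> * (a * exp (T * a) * K0 + exp (T * a) * Ku)" using z'(2) by linarith
        obtain x where x: "x \<in> Lset nn np nq A T N X0 U i" "norm (x - z') \<le> \<tau> * D3"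
          using cL[OF fl(3)] z'(1) unfolding close_def by blast
        have "norm (x - z) \<le> norm (x - z') + norm (z - z')"
          using norm_triangle_ineq[of "x - z'" "z' - z"] by (simp add: norm_minus_commute)
        also have "\<dots> \<le> \<tau> * D4" using x(2) z'b unfolding D4_def by (simp add: distrib_left)
        finally show "\<exists>x\<in>\<Union>i\<in>{0..N}. Lset nn np nq A T N X0 U i. norm (x - z) \<le> \<tau> * D4"
          using x(1) fl(3) by auto
      qed
      then show "hausd nn (\<Union>i\<in>{0..N}. Lset nn np nq A T N X0 U i) (Rint A (zset np X0) (zset nq U) T) \<le> Cn * D4 * \<tau>"
        by (rule hS[OF _ D40])
    qed
  qed
  show ?thesis
    apply (rule exI[of _ "Cn * D1"], rule exI[of _ "Cn * D2"], rule exI[of _ "Cn * D3"], rule exI[of _ "Cn * D4"])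
    using Cn(1) D10 D20 D30 D40 main by auto
qed


end
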